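(* Let $F$ be a tree on $\{1,\dots,r\}$ in which each edge is given an orientation, and let $B<\infty$. For all families $(W_{ij})_{ij\in E(F)}$ and $(W'_{ij})_{ij\in E(F)}$ with all $W_{ij},W'_{ij}\in\mathcal W_B$, $$t_0\big(F,(W_{ij})\big)\le B^{e(F)}$$ and $$\big|t_0\big(F,(W_{ij})\big)-t_0\big(F,(W'_{ij})\big)\big|\le B^{e(F)-1}\sum_{ij\in E(F)}\|W_{ij}-W'_{ij}\|_\square.$$
   Context: $(\mathcal S,\mu)$ is a probability space; $\mathcal W$ is the set of integrable measurable $W:\mathcal S^2\to[0,\infty)$ (not necessarily symmetric), with marginals $\lambda_W(x)=\int W(x,y)d\mu(y)$, $\lambda'_W(y)=\int W(x,y)d\mu(x)$. $\mathcal W_B=\{W\in\mathcal W:\sup_x\lambda_W(x)\le B,\ \sup_y\lambda'_W(y)\le B\}$. For an oriented tree $F$, with an edge oriented from $i$ to $j$ written $ij$, $t_0(F,(W_{ij}))=\int_{\mathcal S^r}\prod_{ij\in E(F)}W_{ij}(x_i,x_j)\,d\mu(x_1)\cdots d\mu(x_r)$. Cut norm: $\|W\|_\square=\sup_{\|f\|_\infty,\|g\|_\infty\le1}|\int f(x)g(y)W(x,y)\,d\mu(x)d\mu(y)|$. $e(F)$ is the number of edges. *)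

theory Defs
  imports "HOL-Probability.Probability"
begin

text \<open>The underlying undirected
  graph is required to be a (simple) tree: no loops, no pair of antiparallel edges
  (so each undirected edge carries exactly one orientation), connected, acyclic.\<close>

definition und_adj :: "(nat \<times> nat) set \<Rightarrow> nat \<Rightarrow> nat \<Rightarrow> bool" where
  "und_adj E i j \<longleftrightarrow> (i, j) \<in> E \<or> (j, i) \<in> E"

definition has_cycle :: "(nat \<times> nat) set \<Rightarrow> bool" where
  "has_cycle E \<longleftrightarrow> (\<exists>vs. length vs \<ge> 3 \<and> distinct vs
      \<and> (\<forall>k. Suc k < length vs \<longrightarrow> und_adj E (vs ! k) (vs ! Suc k))
      \<and> und_adj E (last vs) (hd vs))"

definition oriented_tree :: "nat \<Rightarrow> (nat \<times> nat) set \<Rightarrow> bool" where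
  "oriented_tree r E \<longleftrightarrow> r \<ge> 1 \<and> E \<subseteq> {1..r} \<times> {1..r}
     \<and> (\<forall>i. (i, i) \<notin> E) \<and> (\<forall>i j. (i, j) \<in> E \<longrightarrow> (j, i) \<notin> E)
     \<and> (\<forall>i\<in>{1..r}. \<forall>j\<in>{1..r}. (und_adj E)\<^sup>*\<^sup>* i j)
     \<and> \<not> has_cycle E"

definition in_WB :: "'a measure \<Rightarrow> real \<Rightarrow> ('a \<Rightarrow> 'a \<Rightarrow> real) \<Rightarrow> bool" where
  "in_WB M B W \<longleftrightarrow>
     integrable (M \<Otimes>\<^sub>M M) (\<lambda>(x, y). W x y)
     \<and> (\<forall>x\<in>space M. \<forall>y\<in>space M. 0 \<le> W x y)
     \<and> (\<forall>x\<in>space M. (\<integral>\<^sup>+ y. ennreal (W x y) \<partial>M) \<le> ennreal B)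
     \<and> (\<forall>y\<in>space M. (\<integral>\<^sup>+ x. ennreal (W x y) \<partial>M) \<le> ennreal B)"

definition t0 :: "'a measure \<Rightarrow> nat \<Rightarrow> (nat \<times> nat) set \<Rightarrow> (nat \<times> nat \<Rightarrow> 'a \<Rightarrow> 'a \<Rightarrow> real) \<Rightarrow> real" where
  "t0 M r E W = (\<integral>x. (\<Prod>e\<in>E. W e (x (fst e)) (x (snd e))) \<partial>(PiM {1..r} (\<lambda>_. M)))"

definition cut_norm :: "'a measure \<Rightarrow> ('a \<Rightarrow> 'a \<Rightarrow> real) \<Rightarrow> real" where
  "cut_norm M W = Sup {\<bar>\<integral>z. f (fst z) * g (snd z) * W (fst z) (snd z) \<partial>(M \<Otimes>\<^sub>M M)\<bar> | f g.
       f \<in> borel_measurable M \<and> g \<in> borel_measurable M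
       \<and> (\<forall>x\<in>space M. \<bar>f x\<bar> \<le> 1) \<and> (\<forall>y\<in>space M. \<bar>g y\<bar> \<le> 1)}"

end

theory Submission
  imports Defs
begin

lemma und_adj_sym: "und_adj E x y = und_adj E y x"
  by (auto simp: und_adj_def)

lemma und_adj_mono: "E' \<subseteq> E \<Longrightarrow> und_adj E' x y \<Longrightarrow> und_adj E x y"
  by (auto simp: und_adj_def)

lemma has_cycle_mono: "E' \<subseteq> E \<Longrightarrow> has_cycle E' \<Longrightarrow> has_cycle E"
  unfolding has_cycle_def by (meson und_adj_mono)

fun walk :: "(nat \<times> nat) set \<Rightarrow> nat \<Rightarrow> nat \<Rightarrow> nat \<Rightarrow> nat" where
  "walk E u v 0 = u"
| "walk E u v (Suc 0) = v"
| "walk E u v (Suc (Suc n)) = (SOME z. und_adj E (walk E u v (Suc n)) z \<and> z \<noteq> walk E u v n)"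

lemma walk_lemma:
  assumes fin: "finite V" and sub: "E \<subseteq> V \<times> V" and irr: "\<forall>i. (i, i) \<notin> E"
    and nc: "\<not> has_cycle E" and uv: "und_adj E u v"
    and ext: "\<And>x y. x \<noteq> u \<Longrightarrow> und_adj E x y \<Longrightarrow> \<exists>z. und_adj E x z \<and> z \<noteq> y"
  shows False
proof -
  define w where "w = walk E u v"
  have adjV: "und_adj E x y \<Longrightarrow> y \<in> V" for x y using sub by (auto simp: und_adj_def)
  have step: "und_adj E (w (Suc (Suc k))) (w (Suc k)) \<and> w (Suc (Suc k)) \<noteq> w k"
    if "und_adj E (w k) (w (Suc k))" "w (Suc k) \<noteq> u" for k
  proof -
    from ext[OF that(2)] that(1) obtain z where "und_adj E (w (Suc k)) z \<and> z \<noteq> w k"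
      by (auto simp: und_adj_sym)
    then have "und_adj E (w (Suc k)) (w (Suc (Suc k))) \<and> w (Suc (Suc k)) \<noteq> w k"
      unfolding w_def walk.simps by (rule someI)
    then show ?thesis by (simp add: und_adj_sym)
  qed
  define P where "P m \<longleftrightarrow> (\<exists>i<m. w i = w m)" for m
  have exP: "\<exists>m. P m"
  proof (rule ccontr)
    assume "\<not> (\<exists>m. P m)"
    then have inj: "inj w" unfolding P_def inj_def
      by (metis linorder_neqE_nat)
    have "und_adj E (w n) (w (Suc n))" for n
    proof (induction n)
      case 0 then show ?case using uv by (simp add: w_def)
    next
      case (Suc n)
      have "w (Suc n) \<noteq> u" using inj by (metis inj_eq nat.distinct(1) walk.simps(1) w_def)
      then show ?case using step[OF Suc] by (simp add: und_adj_sym)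
    qed
    then have "range w \<subseteq> V" by (metis adjV image_subsetI walk.simps(1) w_def und_adj_sym)
    then have "finite (range w)" using fin finite_subset by blast
    then show False using inj finite_imageD infinite_UNIV_nat by blast
  qed
  define m where "m = (LEAST m. P m)"
  have Pm: "P m" unfolding m_def using exP by (metis LeastI)
  have notP: "k < m \<Longrightarrow> \<not> P k" for k unfolding m_def using not_less_Least by blast
  have injm: "i < m \<Longrightarrow> j < m \<Longrightarrow> w i = w j \<Longrightarrow> i = j" for i j
    using notP unfolding P_def by (metis linorder_neqE_nat)
  have good: "k < m \<longrightarrow> und_adj E (w k) (w (Suc k))" for k
  proof (induction k)
    case 0 then show ?case using uv by (simp add: w_def)
  next
    case (Suc k)
    show ?case
    proof
      assume km: "Suc k < m"
      have "w (Suc k) \<noteq> u" using injm[of "Suc k" 0] km by (auto simp: w_def)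
      then show "und_adj E (w (Suc k)) (w (Suc (Suc k)))"
        using step Suc km by (simp add: und_adj_sym)
    qed
  qed
  have nb: "Suc k < m \<Longrightarrow> w (Suc (Suc k)) \<noteq> w k" for k
  proof -
    assume km: "Suc k < m"
    have "w (Suc k) \<noteq> u" using injm[of "Suc k" 0] km by (auto simp: w_def)
    then show ?thesis using step good km by simp
  qed
  obtain i where im: "i < m" and wi: "w i = w m" using Pm unfolding P_def by blast
  define vs where "vs = map w [i..<m]"
  have len: "length vs = m - i" by (simp add: vs_def)
  have m1: "und_adj E (w (m - 1)) (w m)" using good[of "m - 1"] im by simp
  have "m - i \<noteq> 1"
  proof
    assume "m - i = 1"
    then have "m = Suc i" by simp
    then show False using m1 wi irr by (simp add: und_adj_def)
  qed
  moreover have "m - i \<noteq> 2"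
  proof
    assume "m - i = 2"
    then have "m = Suc (Suc i)" by simp
    then show False using nb[of i] wi by simp
  qed
  ultimately have "length vs \<ge> 3" using im len by linarith
  moreover have "distinct vs" unfolding vs_def distinct_map
    using injm by (auto simp: inj_on_def)
  moreover have "\<forall>k. Suc k < length vs \<longrightarrow> und_adj E (vs ! k) (vs ! Suc k)"
    using good len by (auto simp: vs_def nth_append)
  moreover have "und_adj E (last vs) (hd vs)"
  proof -
    have "last vs = w (m - 1)" using im by (simp add: vs_def last_map)
    moreover have "hd vs = w i" using im by (simp add: vs_def hd_map upt_conv_Cons)
    ultimately show ?thesis using m1 wi by simp
  qed
  ultimately have "has_cycle E" unfolding has_cycle_def by blast
  then show False using nc by simp
qed

definition leafy :: "(nat \<times> nat) set \<Rightarrow> nat \<Rightarrow> bool" where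
  "leafy E l \<longleftrightarrow> (\<forall>y z. und_adj E l y \<longrightarrow> und_adj E l z \<longrightarrow> y = z)"

lemma leaf_exists:
  assumes fin: "finite V" and sub: "E \<subseteq> V \<times> V" and irr: "\<forall>i. (i, i) \<notin> E"
    and nc: "\<not> has_cycle E" and a: "a \<in> V" and Va: "V \<noteq> {a}"
  shows "\<exists>l\<in>V. l \<noteq> a \<and> leafy E l"
proof (rule ccontr)
  assume H0: "\<not> ?thesis"
  have H: "\<exists>z. und_adj E x z \<and> z \<noteq> y" if "x \<noteq> a" "und_adj E x y" for x y
  proof -
    have "x \<in> V" using that(2) sub by (auto simp: und_adj_def)
    then have "\<not> leafy E x" using H0 that(1) by blast
    then show ?thesis unfolding leafy_def by metis
  qed
  show False
  proof (cases "\<exists>v. und_adj E a v")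
    case True
    then obtain v where "und_adj E a v" by blast
    then show False using walk_lemma[OF fin sub irr nc, of a v] H by blast
  next
    case False
    obtain c where c: "c \<in> V" "c \<noteq> a" using a Va by blast
    have "\<not> leafy E c" using H0 c by blast
    then obtain y where cy: "und_adj E c y" unfolding leafy_def by blast
    have "\<exists>z. und_adj E x z \<and> z \<noteq> y" if "x \<noteq> c" "und_adj E x y" for x y
      using H[OF _ that(2)] that(2) False by blast
    then show False using walk_lemma[OF fin sub irr nc cy] by blast
  qed
qed



lemma leaf_struct:
  assumes sub: "E \<subseteq> V \<times> V" and irr: "\<forall>i. (i, i) \<notin> E" and asym: "\<forall>i j. (i, j) \<in> E \<longrightarrow> (j, i) \<notin> E"
    and lf: "leafy E l"
  shows "(\<forall>e\<in>E. fst e \<noteq> l \<and> snd e \<noteq> l) \<or>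
         (\<exists>p e. p \<in> V \<and> p \<noteq> l \<and> e \<in> E \<and> (e = (p, l) \<or> e = (l, p)) \<and> (\<forall>e'\<in>E - {e}. fst e' \<noteq> l \<and> snd e' \<noteq> l))"
proof (cases "\<forall>e\<in>E. fst e \<noteq> l \<and> snd e \<noteq> l")
  case True then show ?thesis by blast
next
  case False
  then obtain e where e: "e \<in> E" "fst e = l \<or> snd e = l" by blast
  define p where "p = (if fst e = l then snd e else fst e)"
  have ep: "e = (p, l) \<or> e = (l, p)" using e by (cases e) (auto simp: p_def)
  have pl: "p \<noteq> l" using ep e irr by auto
  have pV: "p \<in> V" using ep e sub by auto
  have adj: "und_adj E l p" using ep e by (auto simp: und_adj_def)
  have "\<forall>e'\<in>E - {e}. fst e' \<noteq> l \<and> snd e' \<noteq> l"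
  proof (intro ballI conjI notI)
    fix e' assume e': "e' \<in> E - {e}"
    { assume "fst e' = l"
      then have "und_adj E l (snd e')" using e' by (cases e') (auto simp: und_adj_def)
      then have "snd e' = p" using lf adj unfolding leafy_def by blast
      then show False using e' ep \<open>fst e' = l\<close> asym e(1) by (cases e') auto }
    { assume "snd e' = l"
      then have "und_adj E l (fst e')" using e' by (cases e') (auto simp: und_adj_def)
      then have "fst e' = p" using lf adj unfolding leafy_def by blast
      then show False using e' ep \<open>snd e' = l\<close> asym e(1) by (cases e') auto }
  qed
  then show ?thesis using pV pl e ep by blast
qed

definition dens :: "nat set \<Rightarrow> (nat \<times> nat) set \<Rightarrow> (nat \<Rightarrow> 'a \<Rightarrow> real) \<Rightarrow> (nat \<times> nat \<Rightarrow> 'a \<Rightarrow> 'a \<Rightarrow> real) \<Rightarrow> (nat \<Rightarrow> 'a) \<Rightarrow> real" where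
  "dens V E \<phi> U x = (\<Prod>v\<in>V. \<phi> v (x v)) * (\<Prod>e\<in>E. U e (x (fst e)) (x (snd e)))"

definition ek :: "nat \<times> nat \<Rightarrow> nat \<Rightarrow> (nat \<times> nat \<Rightarrow> 'a \<Rightarrow> 'a \<Rightarrow> real) \<Rightarrow> 'a \<Rightarrow> 'a \<Rightarrow> real" where
  "ek e l U z y = (if snd e = l then U e z y else U e y z)"

lemma dens_insert_edge:
  assumes "finite V'" "finite E'" "l \<notin> V'" "e \<notin> E'" "e = (p, l) \<or> e = (l, p)" "p \<noteq> l"
    "\<forall>e'\<in>E'. fst e' \<noteq> l \<and> snd e' \<noteq> l"
  shows "dens (insert l V') (insert e E') \<phi> U (x(l:=y)) = dens V' E' \<phi> U x * (\<phi> l y * ek e l U (x p) y)"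
proof -
  have 1: "(\<Prod>v\<in>insert l V'. \<phi> v ((x(l:=y)) v)) = \<phi> l y * (\<Prod>v\<in>V'. \<phi> v (x v))"
  proof -
    have "(\<Prod>v\<in>V'. \<phi> v ((x(l:=y)) v)) = (\<Prod>v\<in>V'. \<phi> v (x v))"
      using assms by (intro prod.cong) auto
    then show ?thesis using assms by (simp add: prod.insert)
  qed
  have 2: "(\<Prod>e'\<in>insert e E'. U e' ((x(l:=y)) (fst e')) ((x(l:=y)) (snd e'))) =
      ek e l U (x p) y * (\<Prod>e'\<in>E'. U e' (x (fst e')) (x (snd e')))"
    using assms by (auto simp: prod.insert ek_def intro!: prod.cong)
  show ?thesis unfolding dens_def 1 2 by (simp add: algebra_simps)
qed

lemma dens_insert_iso:
  assumes "finite V'" "l \<notin> V'" "\<forall>e'\<in>E. fst e' \<noteq> l \<and> snd e' \<noteq> l"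
  shows "dens (insert l V') E \<phi> U (x(l:=y)) = dens V' E \<phi> U x * \<phi> l y"
proof -
  have 1: "(\<Prod>v\<in>insert l V'. \<phi> v ((x(l:=y)) v)) = \<phi> l y * (\<Prod>v\<in>V'. \<phi> v (x v))"
  proof -
    have "(\<Prod>v\<in>V'. \<phi> v ((x(l:=y)) v)) = (\<Prod>v\<in>V'. \<phi> v (x v))"
      using assms by (intro prod.cong) auto
    then show ?thesis using assms by (simp add: prod.insert)
  qed
  have 2: "(\<Prod>e'\<in>E. U e' ((x(l:=y)) (fst e')) ((x(l:=y)) (snd e'))) =
      (\<Prod>e'\<in>E. U e' (x (fst e')) (x (snd e')))"
    using assms by (auto intro!: prod.cong)
  show ?thesis unfolding dens_def 1 2 by (simp add: algebra_simps)
qed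

lemma dens_weight:
  assumes "finite V" "p \<in> V"
  shows "dens V E (\<phi>(p := (\<lambda>z. \<phi> p z * c z))) U x = dens V E \<phi> U x * c (x p)"
proof -
  have "(\<Prod>v\<in>V. (\<phi>(p := (\<lambda>z. \<phi> p z * c z))) v (x v)) = (\<phi> p (x p) * c (x p)) * (\<Prod>v\<in>V-{p}. \<phi> v (x v))"
    using assms by (simp add: prod.remove)
  also have "\<dots> = (\<Prod>v\<in>V. \<phi> v (x v)) * c (x p)"
    using assms by (simp add: prod.remove)
  finally show ?thesis unfolding dens_def by simp
qed

lemma dens_nonneg:
  assumes "x \<in> space (PiM V (\<lambda>_. M))" "E \<subseteq> V \<times> V"
    "\<forall>v\<in>V. \<forall>z\<in>space M. 0 \<le> \<phi> v z" "\<forall>e\<in>E. \<forall>a\<in>space M. \<forall>b\<in>space M. 0 \<le> U e a b"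
  shows "0 \<le> dens V E \<phi> U x"
proof -
  have xs: "v \<in> V \<Longrightarrow> x v \<in> space M" for v using assms(1) by (auto simp: space_PiM)
  show ?thesis unfolding dens_def
  proof (intro mult_nonneg_nonneg prod_nonneg)
    fix v assume "v \<in> V" then show "0 \<le> \<phi> v (x v)" using assms(3) xs by blast
  next
    fix e assume "e \<in> E" then show "0 \<le> U e (x (fst e)) (x (snd e))"
      using assms(2,4) xs by (cases e) auto
  qed
qed

lemma meas_edge:
  assumes "(\<lambda>(a, b). f a b) \<in> borel_measurable (M \<Otimes>\<^sub>M M)" "i \<in> V" "j \<in> V"
  shows "(\<lambda>x. f (x i) (x j)) \<in> borel_measurable (PiM V (\<lambda>_. M))"
proof -
  have "(\<lambda>x. (x i, x j)) \<in> measurable (PiM V (\<lambda>_. M)) (M \<Otimes>\<^sub>M M)"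
    using assms by measurable
  from measurable_comp[OF this assms(1)] show ?thesis by (simp add: comp_def)
qed

lemma meas_dens:
  assumes "E \<subseteq> V \<times> V" "\<forall>v\<in>V. \<phi> v \<in> borel_measurable M"
    "\<forall>e\<in>E. (\<lambda>(a, b). U e a b) \<in> borel_measurable (M \<Otimes>\<^sub>M M)"
  shows "dens V E \<phi> U \<in> borel_measurable (PiM V (\<lambda>_. M))"
proof -
  have h1: "(\<lambda>x. \<phi> v (x v)) \<in> borel_measurable (PiM V (\<lambda>_. M))" if "v \<in> V" for v
    using measurable_compose[OF measurable_component_singleton[OF that, of "\<lambda>_. M"], of "\<phi> v"] assms(2) that by blast
  have h2: "(\<lambda>x. U e (x (fst e)) (x (snd e))) \<in> borel_measurable (PiM V (\<lambda>_. M))" if "e \<in> E" for e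
  proof -
    have "fst e \<in> V" "snd e \<in> V" using assms(1) that by auto
    then show ?thesis using meas_edge[of "U e" M "fst e" V "snd e"] assms(3) that by blast
  qed
  have "(\<lambda>x. \<Prod>v\<in>V. \<phi> v (x v)) \<in> borel_measurable (PiM V (\<lambda>_. M))"
    by (rule borel_measurable_prod) (rule h1)
  moreover have "(\<lambda>x. \<Prod>e\<in>E. U e (x (fst e)) (x (snd e))) \<in> borel_measurable (PiM V (\<lambda>_. M))"
    by (rule borel_measurable_prod) (rule h2)
  ultimately show ?thesis unfolding dens_def[abs_def] by (rule borel_measurable_times)
qed

lemma inWB_meas: "in_WB M B W \<Longrightarrow> (\<lambda>(a, b). W a b) \<in> borel_measurable (M \<Otimes>\<^sub>M M)"
  unfolding in_WB_def by auto

lemma ek_bound: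
  assumes "in_WB M B (U e)" "z \<in> space M"
  shows "(\<integral>\<^sup>+ y. ennreal (ek e l U z y) \<partial>M) \<le> ennreal B"
proof (cases "snd e = l")
  case True then show ?thesis using assms unfolding in_WB_def ek_def by simp
next
  case False then show ?thesis using assms unfolding in_WB_def ek_def by simp
qed

lemma ek_meas:
  assumes "in_WB M B (U e)"
  shows "(\<lambda>(z, y). ek e l U z y) \<in> borel_measurable (M \<Otimes>\<^sub>M M)"
proof -
  have m: "(\<lambda>(a, b). U e a b) \<in> borel_measurable (M \<Otimes>\<^sub>M M)" using inWB_meas[OF assms] .
  have m2: "(\<lambda>(a, b). U e b a) \<in> borel_measurable (M \<Otimes>\<^sub>M M)"
  proof -
    have eq: "(\<lambda>(a, b). U e b a) = (\<lambda>(a, b). U e a b) \<circ> (\<lambda>(x, y). (y, x))"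
      by (auto simp: fun_eq_iff)
    show ?thesis unfolding eq by (rule measurable_comp[OF measurable_pair_swap' m])
  qed
  show ?thesis
  proof (cases "snd e = l")
    case True
    then have "(\<lambda>(z, y). ek e l U z y) = (\<lambda>(a, b). U e a b)" by (auto simp: ek_def fun_eq_iff)
    then show ?thesis using m by simp
  next
    case False
    then have "(\<lambda>(z, y). ek e l U z y) = (\<lambda>(a, b). U e b a)" by (auto simp: ek_def fun_eq_iff)
    then show ?thesis using m2 by simp
  qed
qed



lemma ek_meas1:
  assumes "in_WB M B (U e)" "z \<in> space M"
  shows "(\<lambda>y. ek e l U z y) \<in> borel_measurable M"
  using measurable_Pair2[OF ek_meas[of M B U e l, OF assms(1)] assms(2)] by simp

lemma ek_nonneg:
  assumes "in_WB M B (U e)" "z \<in> space M" "y \<in> space M"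
  shows "0 \<le> ek e l U z y"
  using assms unfolding in_WB_def ek_def by auto

lemma nn_bound:
  assumes M: "prob_space M" and fin: "finite V" and sub: "E \<subseteq> V \<times> V"
    and irr: "\<forall>i. (i, i) \<notin> E" and asym: "\<forall>i j. (i, j) \<in> E \<longrightarrow> (j, i) \<notin> E"
    and nc: "\<not> has_cycle E"
    and phi: "\<forall>v\<in>V. \<phi> v \<in> borel_measurable M \<and> (\<forall>z\<in>space M. 0 \<le> \<phi> v z \<and> \<phi> v z \<le> 1)"
    and U: "\<forall>e\<in>E. in_WB M B (U e)" and B: "0 \<le> B"
  shows "(\<integral>\<^sup>+x. ennreal (dens V E \<phi> U x) \<partial>PiM V (\<lambda>_. M)) \<le> ennreal (B ^ card E)"
  using fin sub irr asym nc phi U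
proof (induction V arbitrary: E rule: finite_psubset_induct)
  case (psubset V E)
  interpret P: product_sigma_finite "\<lambda>_::nat. M"
    using M by (simp add: product_sigma_finite_def prob_space_imp_sigma_finite)
  have finE: "finite E" using psubset(1,3) finite_subset by (metis finite_SigmaI)
  have Ucm: "\<forall>e\<in>E. (\<lambda>(a,b). U e a b) \<in> borel_measurable (M \<Otimes>\<^sub>M M)" using psubset(8) inWB_meas by blast
  have Upos: "\<forall>e\<in>E. \<forall>a\<in>space M. \<forall>b\<in>space M. 0 \<le> U e a b" using psubset(8) unfolding in_WB_def by blast
  have phim: "\<forall>v\<in>V. \<phi> v \<in> borel_measurable M" and phip: "\<forall>v\<in>V. \<forall>z\<in>space M. 0 \<le> \<phi> v z"
    using psubset(7) by auto
  have md: "dens V E \<phi> U \<in> borel_measurable (PiM V (\<lambda>_. M))"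
    using meas_dens[OF psubset(3) phim Ucm] .
  have mde: "(\<lambda>x. ennreal (dens V E \<phi> U x)) \<in> borel_measurable (PiM V (\<lambda>_. M))"
    using measurable_compose[OF md measurable_ennreal] .
  show ?case
  proof (cases "V = {}")
    case True
    then have "E = {}" using psubset(3) by auto
    then have "dens V E \<phi> U = (\<lambda>_. 1)" using True by (auto simp: dens_def)
    moreover have "prob_space (PiM V (\<lambda>_. M))" using M by (intro prob_space_PiM) auto
    ultimately show ?thesis using \<open>E = {}\<close> by (simp add: prob_space.emeasure_space_1)
  next
    case False
    then obtain a where a: "a \<in> V" by blast
    have "\<exists>l\<in>V. leafy E l"
    proof (cases "V = {a}")
      case True
      have "leafy E a" unfolding leafy_def und_adj_def using psubset(3,4) True by auto
      then show ?thesis using a by blast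
    next
      case False
      then show ?thesis using leaf_exists[OF psubset(1,3,4,6) a] by blast
    qed
    then obtain l where l: "l \<in> V" "leafy E l" by blast
    define V' where "V' = V - {l}"
    have VV: "V = insert l V'" "l \<notin> V'" "finite V'" "V' \<subset> V" using l psubset(1) by (auto simp: V'_def)
    have split: "(\<integral>\<^sup>+x. ennreal (dens V E \<phi> U x) \<partial>PiM V (\<lambda>_. M))
          = (\<integral>\<^sup>+x. (\<integral>\<^sup>+y. ennreal (dens V E \<phi> U (x(l:=y))) \<partial>M) \<partial>PiM V' (\<lambda>_. M))"
      using P.product_nn_integral_insert[OF VV(3) VV(2), of "\<lambda>x. ennreal (dens V E \<phi> U x)"] mde VV(1)
      by simp
    note LS = leaf_struct[OF psubset(3,4,5) l(2)]
    show ?thesis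
    proof (cases "\<forall>e\<in>E. fst e \<noteq> l \<and> snd e \<noteq> l")
      case True
      note iso = True
      have sub': "E \<subseteq> V' \<times> V'" using iso psubset(3) by (auto simp: V'_def)
      have IH: "(\<integral>\<^sup>+x. ennreal (dens V' E \<phi> U x) \<partial>PiM V' (\<lambda>_. M)) \<le> ennreal (B ^ card E)"
        using psubset(2)[OF VV(4) sub' psubset(4,5,6)] psubset(7,8) VV by auto
      have "(\<integral>\<^sup>+x. (\<integral>\<^sup>+y. ennreal (dens V E \<phi> U (x(l:=y))) \<partial>M) \<partial>PiM V' (\<lambda>_. M))
           \<le> (\<integral>\<^sup>+x. ennreal (dens V' E \<phi> U x) \<partial>PiM V' (\<lambda>_. M))"
      proof (rule nn_integral_mono)
        fix x assume x: "x \<in> space (PiM V' (\<lambda>_. M))"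
        have dp: "0 \<le> dens V' E \<phi> U x"
          using dens_nonneg[OF x sub'] phip Upos VV by auto
        have "(\<integral>\<^sup>+y. ennreal (dens V E \<phi> U (x(l:=y))) \<partial>M) = (\<integral>\<^sup>+y. ennreal (dens V' E \<phi> U x * \<phi> l y) \<partial>M)"
          unfolding VV(1) by (simp only: dens_insert_iso[OF VV(3,2) iso])
        also have "\<dots> \<le> (\<integral>\<^sup>+y. ennreal (dens V' E \<phi> U x) \<partial>M)"
        proof (rule nn_integral_mono)
          fix y assume "y \<in> space M"
          then have "\<phi> l y \<le> 1" using psubset(7) l by auto
          then show "ennreal (dens V' E \<phi> U x * \<phi> l y) \<le> ennreal (dens V' E \<phi> U x)"
            using dp by (simp add: ennreal_leI mult_left_le)
        qed
        also have "\<dots> = ennreal (dens V' E \<phi> U x)" using prob_space.emeasure_space_1[OF M] by simp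
        finally show "(\<integral>\<^sup>+y. ennreal (dens V E \<phi> U (x(l:=y))) \<partial>M) \<le> ennreal (dens V' E \<phi> U x)" .
      qed
      then show ?thesis using split IH by simp
    next
      case False
      then obtain p e where pV: "p \<in> V" and pl: "p \<noteq> l" and eE: "e \<in> E" and ep: "e = (p, l) \<or> e = (l, p)"
        and oth: "\<forall>e'\<in>E - {e}. fst e' \<noteq> l \<and> snd e' \<noteq> l" using LS by blast
      define E' where "E' = E - {e}"
      have EE: "E = insert e E'" "e \<notin> E'" "finite E'" using eE finE by (auto simp: E'_def)
      have cE: "card E = Suc (card E')" using EE by simp
      have sub': "E' \<subseteq> V' \<times> V'"
      proof
        fix e' assume e': "e' \<in> E'"
        then have "e' \<in> E" "fst e' \<noteq> l" "snd e' \<noteq> l" using oth by (auto simp: E'_def)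
        then show "e' \<in> V' \<times> V'" using psubset(3) by (cases e') (auto simp: V'_def)
      qed
      have pV': "p \<in> V'" using pV pl by (simp add: V'_def)
      have IH: "(\<integral>\<^sup>+x. ennreal (dens V' E' \<phi> U x) \<partial>PiM V' (\<lambda>_. M)) \<le> ennreal (B ^ card E')"
      proof (rule psubset(2)[OF VV(4) sub'])
        show "\<forall>i. (i, i) \<notin> E'" "\<forall>i j. (i, j) \<in> E' \<longrightarrow> (j, i) \<notin> E'"
          using psubset(4,5) by (auto simp: E'_def)
        show "\<not> has_cycle E'" using psubset(6) has_cycle_mono[of E' E] by (auto simp: E'_def)
      qed (use psubset(7,8) VV in \<open>auto simp: E'_def\<close>)
      have Ue: "in_WB M B (U e)" using psubset(8) eE by blast
      have "(\<integral>\<^sup>+x. (\<integral>\<^sup>+y. ennreal (dens V E \<phi> U (x(l:=y))) \<partial>M) \<partial>PiM V' (\<lambda>_. M))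
           \<le> (\<integral>\<^sup>+x. ennreal (dens V' E' \<phi> U x) * ennreal B \<partial>PiM V' (\<lambda>_. M))"
      proof (rule nn_integral_mono)
        fix x assume x: "x \<in> space (PiM V' (\<lambda>_. M))"
        have dp: "0 \<le> dens V' E' \<phi> U x"
          using dens_nonneg[OF x sub'] phip Upos VV by (auto simp: E'_def)
        have xp: "x p \<in> space M" using x pV' by (auto simp: space_PiM)
        have "(\<integral>\<^sup>+y. ennreal (dens V E \<phi> U (x(l:=y))) \<partial>M)
            = (\<integral>\<^sup>+y. ennreal (dens V' E' \<phi> U x * (\<phi> l y * ek e l U (x p) y)) \<partial>M)"
        proof -
          have oth': "\<forall>e'\<in>E'. fst e' \<noteq> l \<and> snd e' \<noteq> l" using oth by (simp add: E'_def)
          show ?thesis unfolding VV(1) EE(1)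
            by (simp only: dens_insert_edge[OF VV(3) EE(3) VV(2) EE(2) ep pl oth'])
        qed
        also have "\<dots> \<le> (\<integral>\<^sup>+y. ennreal (dens V' E' \<phi> U x) * ennreal (ek e l U (x p) y) \<partial>M)"
        proof (rule nn_integral_mono)
          fix y assume y: "y \<in> space M"
          then have "\<phi> l y \<le> 1" "0 \<le> \<phi> l y" using psubset(7) l by auto
          moreover have "0 \<le> ek e l U (x p) y" using ek_nonneg[where U=U and e=e, OF Ue xp y] .
          ultimately have "dens V' E' \<phi> U x * (\<phi> l y * ek e l U (x p) y) \<le> dens V' E' \<phi> U x * ek e l U (x p) y"
            using dp by (intro mult_left_mono) (auto simp: mult_left_le_one_le)
          then show "ennreal (dens V' E' \<phi> U x * (\<phi> l y * ek e l U (x p) y)) \<le> ennreal (dens V' E' \<phi> U x) * ennreal (ek e l U (x p) y)"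
            using dp by (simp add: ennreal_mult'[symmetric] ennreal_leI)
        qed
        also have "\<dots> = ennreal (dens V' E' \<phi> U x) * (\<integral>\<^sup>+y. ennreal (ek e l U (x p) y) \<partial>M)"
          using measurable_compose[OF ek_meas1[where U=U and e=e, OF Ue xp] measurable_ennreal] by (intro nn_integral_cmult) simp
        also have "\<dots> \<le> ennreal (dens V' E' \<phi> U x) * ennreal B"
          using ek_bound[where U=U and e=e, OF Ue xp] by (intro mult_left_mono) auto
        finally show "(\<integral>\<^sup>+y. ennreal (dens V E \<phi> U (x(l:=y))) \<partial>M) \<le> ennreal (dens V' E' \<phi> U x) * ennreal B" .
      qed
      also have "\<dots> = (\<integral>\<^sup>+x. ennreal (dens V' E' \<phi> U x) \<partial>PiM V' (\<lambda>_. M)) * ennreal B"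
      proof (rule nn_integral_multc)
        have "\<forall>e\<in>E'. (\<lambda>(a,b). U e a b) \<in> borel_measurable (M \<Otimes>\<^sub>M M)" using Ucm by (auto simp: E'_def)
        then have "dens V' E' \<phi> U \<in> borel_measurable (PiM V' (\<lambda>_. M))"
          using meas_dens[OF sub'] phim VV by auto
        then show "(\<lambda>x. ennreal (dens V' E' \<phi> U x)) \<in> borel_measurable (PiM V' (\<lambda>_. M))"
          using measurable_compose[OF _ measurable_ennreal] by blast
      qed
      also have "\<dots> \<le> ennreal (B ^ card E') * ennreal B" using IH by (intro mult_right_mono) auto
      also have "\<dots> = ennreal (B ^ card E)" using B cE by (simp add: ennreal_mult'[symmetric] mult.commute)
      finally show ?thesis using split by simp
    qed
  qed
qed



lemma integrable_dom:
  fixes f :: "_ \<Rightarrow> real"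
  assumes "f \<in> borel_measurable N" "\<And>x. x \<in> space N \<Longrightarrow> \<bar>f x\<bar> \<le> g x"
    "(\<integral>\<^sup>+x. ennreal (g x) \<partial>N) < \<infinity>"
  shows "integrable N f"
proof (rule integrableI_bounded[OF assms(1)])
  have "(\<integral>\<^sup>+x. ennreal (norm (f x)) \<partial>N) \<le> (\<integral>\<^sup>+x. ennreal (g x) \<partial>N)"
    using assms(2) by (intro nn_integral_mono) (simp add: ennreal_leI)
  then show "(\<integral>\<^sup>+x. ennreal (norm (f x)) \<partial>N) < \<infinity>" using assms(3) by (rule le_less_trans)
qed

lemma my_abs_bound:
  fixes f :: "_ \<Rightarrow> real"
  assumes "integrable M f" "integrable M g" "\<And>x. x \<in> space M \<Longrightarrow> \<bar>f x\<bar> \<le> g x"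
  shows "\<bar>\<integral>x. f x \<partial>M\<bar> \<le> (\<integral>x. g x \<partial>M)"
proof -
  have "\<bar>\<integral>x. f x \<partial>M\<bar> \<le> (\<integral>x. \<bar>f x\<bar> \<partial>M)" using integral_norm_bound[of M f] by simp
  also have "\<dots> \<le> (\<integral>x. g x \<partial>M)"
    using assms by (intro integral_mono) auto
  finally show ?thesis .
qed

lemma inWB_row:
  assumes "in_WB M B P" "z \<in> space M" "0 \<le> B"
  shows "integrable M (\<lambda>y. P z y)" "(\<integral>y. P z y \<partial>M) \<le> B" "0 \<le> (\<integral>y. P z y \<partial>M)"
proof -
  have m: "(\<lambda>y. P z y) \<in> borel_measurable M"
    using measurable_Pair2[OF inWB_meas[OF assms(1)] assms(2)] by simp
  have nn: "\<forall>y\<in>space M. 0 \<le> P z y" using assms unfolding in_WB_def by auto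
  have b: "(\<integral>\<^sup>+y. ennreal (P z y) \<partial>M) \<le> ennreal B" using assms unfolding in_WB_def by auto
  show "integrable M (\<lambda>y. P z y)"
  proof (rule integrableI_nonneg[OF m])
    show "AE x in M. 0 \<le> P z x" using nn by (intro AE_I2) auto
    show "(\<integral>\<^sup>+y. ennreal (P z y) \<partial>M) < \<infinity>"
      using b le_less_trans[OF b] by (simp add: ennreal_less_top)
  qed
  have e: "(\<integral>y. P z y \<partial>M) = enn2real (\<integral>\<^sup>+y. ennreal (P z y) \<partial>M)"
    using nn by (intro integral_eq_nn_integral[OF m]) auto
  show "(\<integral>y. P z y \<partial>M) \<le> B" unfolding e using enn2real_mono[OF b] assms(3) by simp
  show "0 \<le> (\<integral>y. P z y \<partial>M)" unfolding e by simp
qed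

definition gfun :: "'a measure \<Rightarrow> ('a \<Rightarrow> real) \<Rightarrow> ('a \<Rightarrow> 'a \<Rightarrow> real) \<Rightarrow> ('a \<Rightarrow> 'a \<Rightarrow> real) \<Rightarrow> 'a \<Rightarrow> real" where
  "gfun M \<psi> P P' z = (\<integral>y. \<psi> y * (P z y - P' z y) \<partial>M)"

lemma gfun_bound:
  assumes "in_WB M B P" "in_WB M B P'" "z \<in> space M" "0 \<le> B"
    "\<psi> \<in> borel_measurable M" "\<forall>y\<in>space M. 0 \<le> \<psi> y \<and> \<psi> y \<le> 1"
  shows "\<bar>gfun M \<psi> P P' z\<bar> \<le> 2 * B"
proof -
  note r1 = inWB_row[OF assms(1,3,4)] and r2 = inWB_row[OF assms(2,3,4)]
  have nn: "\<forall>y\<in>space M. 0 \<le> P z y \<and> 0 \<le> P' z y" using assms(1,2,3) unfolding in_WB_def by auto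
  have ib: "integrable M (\<lambda>y. P z y + P' z y)" using r1(1) r2(1) by simp
  have mP: "(\<lambda>y. P z y) \<in> borel_measurable M" "(\<lambda>y. P' z y) \<in> borel_measurable M"
    using r1(1) r2(1) by auto
  have bd: "\<bar>\<psi> y * (P z y - P' z y)\<bar> \<le> P z y + P' z y" if "y \<in> space M" for y
  proof -
    have "\<bar>\<psi> y * (P z y - P' z y)\<bar> = \<psi> y * \<bar>P z y - P' z y\<bar>" using assms(6) that by (simp add: abs_mult)
    also have "\<dots> \<le> 1 * \<bar>P z y - P' z y\<bar>" using assms(6) that by (intro mult_right_mono) auto
    also have "\<dots> \<le> P z y + P' z y" using nn that by auto
    finally show ?thesis .
  qed
  have mi: "(\<lambda>y. \<psi> y * (P z y - P' z y)) \<in> borel_measurable M"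
    using assms(5) mP by measurable
  have ii: "integrable M (\<lambda>y. \<psi> y * (P z y - P' z y))"
  proof (rule Bochner_Integration.integrable_bound[OF ib mi])
    show "AE x in M. norm (\<psi> x * (P z x - P' z x)) \<le> norm (P z x + P' z x)"
    proof (intro AE_I2)
      fix x assume x: "x \<in> space M"
      have "0 \<le> P z x + P' z x" using nn x by auto
      then show "norm (\<psi> x * (P z x - P' z x)) \<le> norm (P z x + P' z x)" using bd[OF x] by simp
    qed
  qed
  have "\<bar>gfun M \<psi> P P' z\<bar> \<le> (\<integral>y. P z y + P' z y \<partial>M)"
    unfolding gfun_def by (rule my_abs_bound[OF ii ib bd])
  also have "\<dots> = (\<integral>y. P z y \<partial>M) + (\<integral>y. P' z y \<partial>M)" using r1(1) r2(1) by simp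
  also have "\<dots> \<le> 2 * B" using r1(2) r2(2) by simp
  finally show ?thesis .
qed

lemma gfun_meas:
  assumes "prob_space M" "in_WB M B P" "in_WB M B P'" "\<psi> \<in> borel_measurable M"
  shows "gfun M \<psi> P P' \<in> borel_measurable M"
proof -
  have [measurable]: "(\<lambda>(a, b). P a b) \<in> borel_measurable (M \<Otimes>\<^sub>M M)" "(\<lambda>(a, b). P' a b) \<in> borel_measurable (M \<Otimes>\<^sub>M M)"
    using inWB_meas assms by auto
  have [measurable]: "\<psi> \<in> borel_measurable M" using assms by simp
  have "(\<lambda>(z, y). \<psi> y * (P z y - P' z y)) \<in> borel_measurable (M \<Otimes>\<^sub>M M)"
    by measurable
  then show ?thesis unfolding gfun_def[abs_def]
    using sigma_finite_measure.borel_measurable_lebesgue_integral[OF prob_space_imp_sigma_finite[OF assms(1)]]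
    by blast
qed

lemma h_props:
  assumes "prob_space M" "in_WB M B (U e)" "0 \<le> B" "\<phi> \<in> borel_measurable M" "\<forall>y\<in>space M. 0 \<le> \<phi> y \<and> \<phi> y \<le> 1"
  shows "(\<lambda>z. \<integral>y. \<phi> y * ek e l U z y \<partial>M) \<in> borel_measurable M"
    and "z \<in> space M \<Longrightarrow> 0 \<le> (\<integral>y. \<phi> y * ek e l U z y \<partial>M) \<and> (\<integral>y. \<phi> y * ek e l U z y \<partial>M) \<le> B"
proof -
  have [measurable]: "(\<lambda>(z, y). ek e l U z y) \<in> borel_measurable (M \<Otimes>\<^sub>M M)" using ek_meas[where U=U and e=e, OF assms(2)] .
  have [measurable]: "\<phi> \<in> borel_measurable M" using assms by simp
  have "(\<lambda>(z, y). \<phi> y * ek e l U z y) \<in> borel_measurable (M \<Otimes>\<^sub>M M)"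
    by measurable
  then show "(\<lambda>z. \<integral>y. \<phi> y * ek e l U z y \<partial>M) \<in> borel_measurable M"
    using sigma_finite_measure.borel_measurable_lebesgue_integral[OF prob_space_imp_sigma_finite[OF assms(1)]]
    by blast
  assume z: "z \<in> space M"
  have m: "(\<lambda>y. \<phi> y * ek e l U z y) \<in> borel_measurable M"
    using ek_meas1[where U=U and e=e, OF assms(2) z] by measurable
  have nn: "\<forall>y\<in>space M. 0 \<le> \<phi> y * ek e l U z y" using ek_nonneg[where U=U and e=e, OF assms(2) z] assms(5) by auto
  have e: "(\<integral>y. \<phi> y * ek e l U z y \<partial>M) = enn2real (\<integral>\<^sup>+y. ennreal (\<phi> y * ek e l U z y) \<partial>M)"
    using nn by (intro integral_eq_nn_integral[OF m]) auto
  have "(\<integral>\<^sup>+y. ennreal (\<phi> y * ek e l U z y) \<partial>M) \<le> (\<integral>\<^sup>+y. ennreal (ek e l U z y) \<partial>M)"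
  proof (rule nn_integral_mono)
    fix y assume y: "y \<in> space M"
    then show "ennreal (\<phi> y * ek e l U z y) \<le> ennreal (ek e l U z y)"
      using ek_nonneg[where U=U and e=e, OF assms(2) z y] assms(5) by (intro ennreal_leI) (simp add: mult_left_le_one_le)
  qed
  also have "\<dots> \<le> ennreal B" using ek_bound[where U=U and e=e, OF assms(2) z] .
  finally have b: "(\<integral>\<^sup>+y. ennreal (\<phi> y * ek e l U z y) \<partial>M) \<le> ennreal B" .
  show "0 \<le> (\<integral>y. \<phi> y * ek e l U z y \<partial>M) \<and> (\<integral>y. \<phi> y * ek e l U z y \<partial>M) \<le> B"
    unfolding e using enn2real_mono[OF b] assms(3) by simp
qed

lemma step_edge:
  assumes M: "prob_space M" and fin': "finite V'" and lV': "l \<notin> V'" and finE': "finite E'"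
    and eE': "e \<notin> E'" and ep: "e = (p, l) \<or> e = (l, p)" and pl: "p \<noteq> l" and pV': "p \<in> V'"
    and oth: "\<forall>e'\<in>E'. fst e' \<noteq> l \<and> snd e' \<noteq> l"
    and Ue: "in_WB M B (U e)" and B: "0 \<le> B"
    and Gam: "\<And>x y. \<Gamma> (x(l:=y)) = \<Gamma> x"
    and int: "integrable (PiM (insert l V') (\<lambda>_. M)) (\<lambda>x. dens (insert l V') (insert e E') \<phi> U x * \<Gamma> x)"
    and hp: "\<And>z. z \<in> space M \<Longrightarrow> 0 \<le> h z \<and> h z \<le> B"
    and hdef: "h = (\<lambda>z. \<integral>y. \<phi> l y * ek e l U z y \<partial>M)"
  shows "(\<integral>x. dens (insert l V') (insert e E') \<phi> U x * \<Gamma> x \<partial>PiM (insert l V') (\<lambda>_. M))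
     = B * (\<integral>x. dens V' E' (\<phi>(p := (\<lambda>z. \<phi> p z * (h z / B)))) U x * \<Gamma> x \<partial>PiM V' (\<lambda>_. M))"
proof -
  interpret P: product_sigma_finite "\<lambda>_::nat. M"
    using M by (simp add: product_sigma_finite_def prob_space_imp_sigma_finite)
  have "(\<integral>x. dens (insert l V') (insert e E') \<phi> U x * \<Gamma> x \<partial>PiM (insert l V') (\<lambda>_. M))
     = (\<integral>x. (\<integral>y. dens (insert l V') (insert e E') \<phi> U (x(l:=y)) * \<Gamma> (x(l:=y)) \<partial>M) \<partial>PiM V' (\<lambda>_. M))"
    using P.product_integral_insert[OF fin' lV' int] by simp
  also have "\<dots> = (\<integral>x. B * (dens V' E' (\<phi>(p := (\<lambda>z. \<phi> p z * (h z / B)))) U x * \<Gamma> x) \<partial>PiM V' (\<lambda>_. M))"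
  proof (rule Bochner_Integration.integral_cong[OF refl])
    fix x assume x: "x \<in> space (PiM V' (\<lambda>_. M))"
    have xp: "x p \<in> space M" using x pV' by (auto simp: space_PiM)
    have hB: "h (x p) = B * (h (x p) / B)" using hp[OF xp] by (cases "B = 0") auto
    have "(\<integral>y. dens (insert l V') (insert e E') \<phi> U (x(l:=y)) * \<Gamma> (x(l:=y)) \<partial>M)
        = (\<integral>y. (dens V' E' \<phi> U x * \<Gamma> x) * (\<phi> l y * ek e l U (x p) y) \<partial>M)"
      by (intro Bochner_Integration.integral_cong refl)
         (simp only: dens_insert_edge[OF fin' finE' lV' eE' ep pl oth] Gam ac_simps)
    also have "\<dots> = (dens V' E' \<phi> U x * \<Gamma> x) * h (x p)"
      unfolding hdef by simp
    also have "\<dots> = B * (dens V' E' \<phi> U x * (h (x p) / B) * \<Gamma> x)"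
      by (subst hB) (simp add: ac_simps)
    also have "\<dots> = B * (dens V' E' (\<phi>(p := (\<lambda>z. \<phi> p z * (h z / B)))) U x * \<Gamma> x)"
      using dens_weight[OF fin' pV', of E' \<phi> "\<lambda>z. h z / B" U x] by simp
    finally show "(\<integral>y. dens (insert l V') (insert e E') \<phi> U (x(l:=y)) * \<Gamma> (x(l:=y)) \<partial>M)
        = B * (dens V' E' (\<phi>(p := (\<lambda>z. \<phi> p z * (h z / B)))) U x * \<Gamma> x)" .
  qed
  also have "\<dots> = B * (\<integral>x. dens V' E' (\<phi>(p := (\<lambda>z. \<phi> p z * (h z / B)))) U x * \<Gamma> x \<partial>PiM V' (\<lambda>_. M))"
    by simp
  finally show ?thesis .
qed

lemma step_iso:
  assumes M: "prob_space M" and fin': "finite V'" and lV': "l \<notin> V'"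
    and oth: "\<forall>e'\<in>E. fst e' \<noteq> l \<and> snd e' \<noteq> l"
    and Gam: "\<And>x y. \<Gamma> (x(l:=y)) = \<Gamma> x"
    and int: "integrable (PiM (insert l V') (\<lambda>_. M)) (\<lambda>x. dens (insert l V') E \<phi> U x * \<Gamma> x)"
  shows "(\<integral>x. dens (insert l V') E \<phi> U x * \<Gamma> x \<partial>PiM (insert l V') (\<lambda>_. M))
     = (\<integral>y. \<phi> l y \<partial>M) * (\<integral>x. dens V' E \<phi> U x * \<Gamma> x \<partial>PiM V' (\<lambda>_. M))"
proof -
  interpret P: product_sigma_finite "\<lambda>_::nat. M"
    using M by (simp add: product_sigma_finite_def prob_space_imp_sigma_finite)
  have "(\<integral>x. dens (insert l V') E \<phi> U x * \<Gamma> x \<partial>PiM (insert l V') (\<lambda>_. M))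
     = (\<integral>x. (\<integral>y. dens (insert l V') E \<phi> U (x(l:=y)) * \<Gamma> (x(l:=y)) \<partial>M) \<partial>PiM V' (\<lambda>_. M))"
    using P.product_integral_insert[OF fin' lV' int] by simp
  also have "\<dots> = (\<integral>x. (\<integral>y. \<phi> l y \<partial>M) * (dens V' E \<phi> U x * \<Gamma> x) \<partial>PiM V' (\<lambda>_. M))"
  proof (rule Bochner_Integration.integral_cong[OF refl])
    fix x
    have "(\<integral>y. dens (insert l V') E \<phi> U (x(l:=y)) * \<Gamma> (x(l:=y)) \<partial>M)
        = (\<integral>y. (dens V' E \<phi> U x * \<Gamma> x) * \<phi> l y \<partial>M)"
      by (intro Bochner_Integration.integral_cong refl)
         (simp only: dens_insert_iso[OF fin' lV' oth] Gam ac_simps)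
    then show "(\<integral>y. dens (insert l V') E \<phi> U (x(l:=y)) * \<Gamma> (x(l:=y)) \<partial>M)
        = (\<integral>y. \<phi> l y \<partial>M) * (dens V' E \<phi> U x * \<Gamma> x)" by simp
  qed
  also have "\<dots> = (\<integral>y. \<phi> l y \<partial>M) * (\<integral>x. dens V' E \<phi> U x * \<Gamma> x \<partial>PiM V' (\<lambda>_. M))"
    by simp
  finally show ?thesis .
qed



lemma int_fgD:
  assumes "in_WB M B P" "in_WB M B P'" "f \<in> borel_measurable M" "g \<in> borel_measurable M"
    "\<forall>x\<in>space M. \<bar>f x\<bar> \<le> 1" "\<forall>y\<in>space M. \<bar>g y\<bar> \<le> 1"
  shows "integrable (M \<Otimes>\<^sub>M M) (\<lambda>z. f (fst z) * g (snd z) * (P (fst z) (snd z) - P' (fst z) (snd z)))"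
    and "integrable (M \<Otimes>\<^sub>M M) (\<lambda>z. \<bar>P (fst z) (snd z) - P' (fst z) (snd z)\<bar>)"
    and "\<And>z. z \<in> space (M \<Otimes>\<^sub>M M) \<Longrightarrow> \<bar>f (fst z) * g (snd z) * (P (fst z) (snd z) - P' (fst z) (snd z))\<bar> \<le> \<bar>P (fst z) (snd z) - P' (fst z) (snd z)\<bar>"
proof -
  have e: "(\<lambda>(x, y). Q x y) = (\<lambda>z. Q (fst z) (snd z))" for Q :: "'a \<Rightarrow> 'a \<Rightarrow> real"
    by (auto simp: fun_eq_iff)
  have iP: "integrable (M \<Otimes>\<^sub>M M) (\<lambda>z. P (fst z) (snd z))" "integrable (M \<Otimes>\<^sub>M M) (\<lambda>z. P' (fst z) (snd z))"
    using assms(1,2) unfolding in_WB_def e by auto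
  have iD: "integrable (M \<Otimes>\<^sub>M M) (\<lambda>z. P (fst z) (snd z) - P' (fst z) (snd z))"
    using iP by simp
  then show "integrable (M \<Otimes>\<^sub>M M) (\<lambda>z. \<bar>P (fst z) (snd z) - P' (fst z) (snd z)\<bar>)"
    by (rule integrable_abs)
  have mD: "(\<lambda>z. P (fst z) (snd z) - P' (fst z) (snd z)) \<in> borel_measurable (M \<Otimes>\<^sub>M M)"
    using iD by auto
  have mf: "(\<lambda>z. f (fst z)) \<in> borel_measurable (M \<Otimes>\<^sub>M M)"
    using measurable_compose[OF measurable_fst assms(3)] .
  have mg: "(\<lambda>z. g (snd z)) \<in> borel_measurable (M \<Otimes>\<^sub>M M)"
    using measurable_compose[OF measurable_snd assms(4)] .
  have m: "(\<lambda>z. f (fst z) * g (snd z) * (P (fst z) (snd z) - P' (fst z) (snd z))) \<in> borel_measurable (M \<Otimes>\<^sub>M M)"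
    by (intro borel_measurable_times mf mg mD)
  show bd: "\<bar>f (fst z) * g (snd z) * (P (fst z) (snd z) - P' (fst z) (snd z))\<bar> \<le> \<bar>P (fst z) (snd z) - P' (fst z) (snd z)\<bar>"
    if z: "z \<in> space (M \<Otimes>\<^sub>M M)" for z
  proof -
    have "fst z \<in> space M" "snd z \<in> space M" using z by (auto simp: space_pair_measure)
    then have "\<bar>f (fst z)\<bar> \<le> 1" "\<bar>g (snd z)\<bar> \<le> 1" using assms(5,6) by auto
    then have "\<bar>f (fst z) * g (snd z)\<bar> \<le> 1" by (simp add: abs_mult mult_le_one)
    then show ?thesis by (simp add: abs_mult mult_left_le_one_le)
  qed
  show "integrable (M \<Otimes>\<^sub>M M) (\<lambda>z. f (fst z) * g (snd z) * (P (fst z) (snd z) - P' (fst z) (snd z)))"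
    by (rule Bochner_Integration.integrable_bound[OF iD m]) (use bd in \<open>auto intro: AE_I2\<close>)
qed

lemma cut_le:
  assumes "in_WB M B P" "in_WB M B P'" "f \<in> borel_measurable M" "g \<in> borel_measurable M"
    "\<forall>x\<in>space M. \<bar>f x\<bar> \<le> 1" "\<forall>y\<in>space M. \<bar>g y\<bar> \<le> 1"
  shows "\<bar>\<integral>z. f (fst z) * g (snd z) * (P (fst z) (snd z) - P' (fst z) (snd z)) \<partial>(M \<Otimes>\<^sub>M M)\<bar>
      \<le> cut_norm M (\<lambda>x y. P x y - P' x y)"
proof -
  define K where "K = (\<integral>z. \<bar>P (fst z) (snd z) - P' (fst z) (snd z)\<bar> \<partial>(M \<Otimes>\<^sub>M M))"
  define S where "S = {\<bar>\<integral>z. f (fst z) * g (snd z) * (P (fst z) (snd z) - P' (fst z) (snd z)) \<partial>(M \<Otimes>\<^sub>M M)\<bar> | f g.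
       f \<in> borel_measurable M \<and> g \<in> borel_measurable M
       \<and> (\<forall>x\<in>space M. \<bar>f x\<bar> \<le> 1) \<and> (\<forall>y\<in>space M. \<bar>g y\<bar> \<le> 1)}"
  have cn: "cut_norm M (\<lambda>x y. P x y - P' x y) = Sup S" unfolding cut_norm_def S_def by simp
  have mem: "\<bar>\<integral>z. f (fst z) * g (snd z) * (P (fst z) (snd z) - P' (fst z) (snd z)) \<partial>(M \<Otimes>\<^sub>M M)\<bar> \<in> S"
    unfolding S_def using assms(3-6) by blast
  have "bdd_above S"
  proof (rule bdd_aboveI)
    fix x assume "x \<in> S"
    then obtain f' g' where fg: "f' \<in> borel_measurable M" "g' \<in> borel_measurable M"
      "\<forall>x\<in>space M. \<bar>f' x\<bar> \<le> 1" "\<forall>y\<in>space M. \<bar>g' y\<bar> \<le> 1"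
      and x: "x = \<bar>\<integral>z. f' (fst z) * g' (snd z) * (P (fst z) (snd z) - P' (fst z) (snd z)) \<partial>(M \<Otimes>\<^sub>M M)\<bar>"
      unfolding S_def by blast
    note I = int_fgD[OF assms(1,2) fg]
    show "x \<le> K" unfolding x K_def by (rule my_abs_bound[OF I(1) I(2) I(3)])
  qed
  then show ?thesis unfolding cn by (rule cSup_upper[OF mem])
qed

lemma weight_update:
  fixes \<phi> :: "nat \<Rightarrow> 'a \<Rightarrow> real"
  assumes "\<forall>v\<in>V. \<phi> v \<in> borel_measurable M \<and> (\<forall>z\<in>space M. 0 \<le> \<phi> v z \<and> \<phi> v z \<le> 1)"
    "h \<in> borel_measurable M" "\<And>z. z \<in> space M \<Longrightarrow> 0 \<le> h z \<and> h z \<le> B"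
  shows "\<forall>v\<in>V. (\<phi>(p := (\<lambda>z. \<phi> p z * (h z / B)))) v \<in> borel_measurable M \<and>
     (\<forall>z\<in>space M. 0 \<le> (\<phi>(p := (\<lambda>z. \<phi> p z * (h z / B)))) v z \<and> (\<phi>(p := (\<lambda>z. \<phi> p z * (h z / B)))) v z \<le> 1)"
proof
  fix v assume v: "v \<in> V"
  show "(\<phi>(p := (\<lambda>z. \<phi> p z * (h z / B)))) v \<in> borel_measurable M \<and>
     (\<forall>z\<in>space M. 0 \<le> (\<phi>(p := (\<lambda>z. \<phi> p z * (h z / B)))) v z \<and> (\<phi>(p := (\<lambda>z. \<phi> p z * (h z / B)))) v z \<le> 1)"
  proof (cases "v = p")
    case True
    have m: "(\<lambda>z. \<phi> p z * (h z / B)) \<in> borel_measurable M"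
    proof -
      have mp: "\<phi> p \<in> borel_measurable M" using assms(1) v True by auto
      show ?thesis using borel_measurable_times[OF mp borel_measurable_divide[OF assms(2) borel_measurable_const[of B M]]] .
    qed
    have "0 \<le> \<phi> p z * (h z / B) \<and> \<phi> p z * (h z / B) \<le> 1" if z: "z \<in> space M" for z
    proof -
      have a: "0 \<le> \<phi> p z" "\<phi> p z \<le> 1" using assms(1) v True z by auto
      have b: "0 \<le> h z / B" "h z / B \<le> 1" using assms(3)[OF z]
        by (cases "B = 0"; auto simp: divide_le_eq_1)+
      have "0 \<le> \<phi> p z * (h z / B)" using a(1) b(1) by (rule mult_nonneg_nonneg)
      moreover have "\<phi> p z * (h z / B) \<le> 1" using mult_le_one[OF a(2) b(1) b(2)] by simp
      ultimately show ?thesis by blast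
    qed
    then show ?thesis using m True by simp
  next
    case False then show ?thesis using assms(1) v by simp
  qed
qed

lemma integrable_phi:
  fixes \<phi> :: "'a \<Rightarrow> real"
  assumes "prob_space M" "\<phi> \<in> borel_measurable M" "\<forall>z\<in>space M. 0 \<le> \<phi> z \<and> \<phi> z \<le> 1"
  shows "0 \<le> (\<integral>y. \<phi> y \<partial>M) \<and> (\<integral>y. \<phi> y \<partial>M) \<le> 1"
proof -
  interpret prob_space M by fact
  have i: "integrable M \<phi>"
  proof -
    have c: "integrable M (\<lambda>_. 1::real)" by simp
    show ?thesis
    proof (rule Bochner_Integration.integrable_bound[OF c assms(2)])
      show "AE x in M. norm (\<phi> x) \<le> norm (1::real)" using assms(3) by (intro AE_I2) auto
    qed
  qed
  have "(\<integral>y. \<phi> y \<partial>M) \<le> (\<integral>y. 1 \<partial>M)" using assms i by (intro integral_mono) auto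
  moreover have "0 \<le> (\<integral>y. \<phi> y \<partial>M)" using assms by (intro integral_nonneg_AE) (auto intro: AE_I2)
  ultimately show ?thesis using prob_space by simp
qed



lemma sub_remove:
  assumes "E \<subseteq> V \<times> V" "E' \<subseteq> E" "\<forall>e\<in>E'. fst e \<noteq> l \<and> snd e \<noteq> l"
  shows "E' \<subseteq> (V - {l}) \<times> (V - {l})"
proof
  fix e' assume e': "e' \<in> E'"
  then have "e' \<in> E" "fst e' \<noteq> l" "snd e' \<noteq> l" using assms by auto
  then show "e' \<in> (V - {l}) \<times> (V - {l})" using assms(1) by (cases e') auto
qed

lemma forest_sub:
  assumes "\<forall>i. (i, i) \<notin> E" "\<forall>i j. (i, j) \<in> E \<longrightarrow> (j, i) \<notin> E" "\<not> has_cycle E" "E' \<subseteq> E"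
  shows "\<forall>i. (i, i) \<notin> E'" "\<forall>i j. (i, j) \<in> E' \<longrightarrow> (j, i) \<notin> E'" "\<not> has_cycle E'"
  using assms has_cycle_mono[OF assms(4)] by auto

lemma bound_g:
  assumes M: "prob_space M" and B: "0 \<le> B" and P: "in_WB M B P" and P': "in_WB M B P'"
    and psim: "\<psi> \<in> borel_measurable M" and psib: "\<forall>y\<in>space M. 0 \<le> \<psi> y \<and> \<psi> y \<le> 1"
    and fin: "finite V" and a: "a \<in> V" and sub: "E \<subseteq> V \<times> V"
    and irr: "\<forall>i. (i, i) \<notin> E" and asym: "\<forall>i j. (i, j) \<in> E \<longrightarrow> (j, i) \<notin> E"
    and nc: "\<not> has_cycle E"
    and phi: "\<forall>v\<in>V. \<phi> v \<in> borel_measurable M \<and> (\<forall>z\<in>space M. 0 \<le> \<phi> v z \<and> \<phi> v z \<le> 1)"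
    and U: "\<forall>e\<in>E. in_WB M B (U e)"
  shows "\<bar>\<integral>x. dens V E \<phi> U x * gfun M \<psi> P P' (x a) \<partial>PiM V (\<lambda>_. M)\<bar>
     \<le> B ^ card E * cut_norm M (\<lambda>x y. P x y - P' x y)"
  using fin a sub irr asym nc phi U
proof (induction V arbitrary: E \<phi> rule: finite_psubset_induct)
  case (psubset V E \<phi>)
  note IH = psubset(2) and finV = psubset(1) and aV = psubset(3) and subE = psubset(4)
    and irrE = psubset(5) and asymE = psubset(6) and ncE = psubset(7) and phiV = psubset(8) and UE = psubset(9)
  interpret P: product_sigma_finite "\<lambda>_::nat. M"
    using M by (simp add: product_sigma_finite_def prob_space_imp_sigma_finite)
  define G where "G = gfun M \<psi> P P'"
  define C where "C = cut_norm M (\<lambda>x y. P x y - P' x y)"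
  have Gm: "G \<in> borel_measurable M" unfolding G_def by (rule gfun_meas[OF M P P' psim])
  have Gb: "\<And>z. z \<in> space M \<Longrightarrow> \<bar>G z\<bar> \<le> 2 * B" unfolding G_def using gfun_bound[OF P P' _ B psim psib] by blast
  have finE: "finite E" using finV subE by (metis finite_SigmaI finite_subset)
  have Ucm: "\<forall>e\<in>E. (\<lambda>(a,b). U e a b) \<in> borel_measurable (M \<Otimes>\<^sub>M M)" using UE inWB_meas by blast
  have Upos: "\<forall>e\<in>E. \<forall>a\<in>space M. \<forall>b\<in>space M. 0 \<le> U e a b" using UE unfolding in_WB_def by blast
  have phim: "\<forall>v\<in>V. \<phi> v \<in> borel_measurable M" and phip: "\<forall>v\<in>V. \<forall>z\<in>space M. 0 \<le> \<phi> v z"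
    using phiV by auto
  have md: "dens V E \<phi> U \<in> borel_measurable (PiM V (\<lambda>_. M))" using meas_dens[OF subE phim Ucm] .
  have mG: "(\<lambda>x. G (x a)) \<in> borel_measurable (PiM V (\<lambda>_. M))"
    using measurable_compose[OF measurable_component_singleton[OF aV, of "\<lambda>_. M"] Gm] .
  have nnb: "(\<integral>\<^sup>+x. ennreal (dens V E \<phi> U x) \<partial>PiM V (\<lambda>_. M)) \<le> ennreal (B ^ card E)"
    using nn_bound[OF M finV subE irrE asymE ncE phiV UE B] .
  have int: "integrable (PiM V (\<lambda>_. M)) (\<lambda>x. dens V E \<phi> U x * G (x a))"
  proof (rule integrable_dom[where g = "\<lambda>x. dens V E \<phi> U x * (2 * B)"])
    show "(\<lambda>x. dens V E \<phi> U x * G (x a)) \<in> borel_measurable (PiM V (\<lambda>_. M))"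
      using borel_measurable_times[OF md mG] .
  next
    fix x assume x: "x \<in> space (PiM V (\<lambda>_. M))"
    have dp: "0 \<le> dens V E \<phi> U x" using dens_nonneg[OF x subE] phip Upos by auto
    have "x a \<in> space M" using x aV by (auto simp: space_PiM)
    then have "\<bar>G (x a)\<bar> \<le> 2 * B" by (rule Gb)
    then show "\<bar>dens V E \<phi> U x * G (x a)\<bar> \<le> dens V E \<phi> U x * (2 * B)"
      using dp by (simp add: abs_mult mult_left_mono)
  next
    have "(\<integral>\<^sup>+x. ennreal (dens V E \<phi> U x * (2 * B)) \<partial>PiM V (\<lambda>_. M))
        = (\<integral>\<^sup>+x. ennreal (dens V E \<phi> U x) * ennreal (2 * B) \<partial>PiM V (\<lambda>_. M))"
      using B by (intro nn_integral_cong) (simp add: ennreal_mult'')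
    also have "\<dots> = (\<integral>\<^sup>+x. ennreal (dens V E \<phi> U x) \<partial>PiM V (\<lambda>_. M)) * ennreal (2 * B)"
      using measurable_compose[OF md measurable_ennreal] by (rule nn_integral_multc)
    also have "\<dots> \<le> ennreal (B ^ card E) * ennreal (2 * B)" using nnb by (intro mult_right_mono) auto
    also have "\<dots> = ennreal (B ^ card E * (2 * B))" using B by (simp add: ennreal_mult'')
    also have "\<dots> < \<infinity>" by simp
    finally show "(\<integral>\<^sup>+x. ennreal (dens V E \<phi> U x * (2 * B)) \<partial>PiM V (\<lambda>_. M)) < \<infinity>" .
  qed
  have main: "\<bar>\<integral>x. dens V E \<phi> U x * G (x a) \<partial>PiM V (\<lambda>_. M)\<bar> \<le> B ^ card E * C"
  proof (cases "V = {a}")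
    case True
    have E0: "E = {}" using subE irrE True by auto
    have dens1: "dens V E \<phi> U x = \<phi> a (x a)" for x using True E0 by (simp add: dens_def)
    have pam: "\<phi> a \<in> borel_measurable M" using phim aV by auto
    have fm: "(\<lambda>z. \<phi> a z * G z) \<in> borel_measurable M" using borel_measurable_times[OF pam Gm] .
    have b1: "\<forall>x\<in>space M. \<bar>\<phi> a x\<bar> \<le> 1" using phiV aV by auto
    have b2: "\<forall>x\<in>space M. \<bar>\<psi> x\<bar> \<le> 1" using psib by auto
    have "(\<integral>x. dens V E \<phi> U x * G (x a) \<partial>PiM V (\<lambda>_. M)) = (\<integral>x. (\<lambda>z. \<phi> a z * G z) (x a) \<partial>PiM {a} (\<lambda>_. M))"
      using True dens1 by simp
    also have "\<dots> = (\<integral>z. \<phi> a z * G z \<partial>M)" using P.product_integral_singleton[OF fm] by simp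
    also have "\<dots> = (\<integral>z. (\<integral>y. \<phi> a z * \<psi> y * (P z y - P' z y) \<partial>M) \<partial>M)"
      by (intro Bochner_Integration.integral_cong refl) (simp add: G_def gfun_def mult.assoc)
    also have "\<dots> = (\<integral>z. \<phi> a (fst z) * \<psi> (snd z) * (P (fst z) (snd z) - P' (fst z) (snd z)) \<partial>(M \<Otimes>\<^sub>M M))"
    proof -
      interpret PS: pair_sigma_finite M M
        unfolding pair_sigma_finite_def using prob_space_imp_sigma_finite[OF M] by simp
      have I: "integrable (M \<Otimes>\<^sub>M M) (\<lambda>z. \<phi> a (fst z) * \<psi> (snd z) * (P (fst z) (snd z) - P' (fst z) (snd z)))"
        using int_fgD(1)[OF P P' pam psim b1 b2] .
      have eq: "(\<lambda>z. \<phi> a (fst z) * \<psi> (snd z) * (P (fst z) (snd z) - P' (fst z) (snd z)))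
          = (\<lambda>(z, y). \<phi> a z * \<psi> y * (P z y - P' z y))" by (auto simp: fun_eq_iff)
      show ?thesis using PS.integral_fst[of "\<lambda>z y. \<phi> a z * \<psi> y * (P z y - P' z y)"] I unfolding eq by simp
    qed
    finally have eqn: "(\<integral>x. dens V E \<phi> U x * G (x a) \<partial>PiM V (\<lambda>_. M))
       = (\<integral>z. \<phi> a (fst z) * \<psi> (snd z) * (P (fst z) (snd z) - P' (fst z) (snd z)) \<partial>(M \<Otimes>\<^sub>M M))" .
    show ?thesis unfolding eqn C_def using cut_le[OF P P' pam psim b1 b2] E0 by simp
  next
    case False
    obtain l where l: "l \<in> V" "l \<noteq> a" "leafy E l" using leaf_exists[OF finV subE irrE ncE aV False] by blast
    define V' where "V' = V - {l}"
    have VV: "V = insert l V'" "l \<notin> V'" "finite V'" "V' \<subset> V" "a \<in> V'" using l finV aV by (auto simp: V'_def)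
    have Gam: "\<And>x y. (\<lambda>x. G (x a)) (x(l:=y)) = (\<lambda>x. G (x a)) x" using l(2) by simp
    have phiV': "\<forall>v\<in>V'. \<phi> v \<in> borel_measurable M \<and> (\<forall>z\<in>space M. 0 \<le> \<phi> v z \<and> \<phi> v z \<le> 1)"
      using phiV VV by auto
    note LS = leaf_struct[OF subE irrE asymE l(3)]
    show ?thesis
    proof (cases "\<forall>e\<in>E. fst e \<noteq> l \<and> snd e \<noteq> l")
      case True
      have sub': "E \<subseteq> V' \<times> V'" unfolding V'_def using sub_remove[OF subE _ True] by blast
      have int': "integrable (PiM (insert l V') (\<lambda>_. M)) (\<lambda>x. dens (insert l V') E \<phi> U x * G (x a))"
        using int VV(1) by simp
      have st: "(\<integral>x. dens V E \<phi> U x * G (x a) \<partial>PiM V (\<lambda>_. M))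
          = (\<integral>y. \<phi> l y \<partial>M) * (\<integral>x. dens V' E \<phi> U x * G (x a) \<partial>PiM V' (\<lambda>_. M))"
        using step_iso[where \<Gamma>="\<lambda>x. G (x a)", OF M VV(3) VV(2) True Gam int'] VV(1) by simp
      have ih: "\<bar>\<integral>x. dens V' E \<phi> U x * G (x a) \<partial>PiM V' (\<lambda>_. M)\<bar> \<le> B ^ card E * C"
        using IH[OF VV(4) VV(5) sub' irrE asymE ncE phiV' UE] unfolding G_def C_def .
      have c: "0 \<le> (\<integral>y. \<phi> l y \<partial>M) \<and> (\<integral>y. \<phi> l y \<partial>M) \<le> 1" using integrable_phi[OF M] phiV l(1) by auto
      have "\<bar>(\<integral>y. \<phi> l y \<partial>M) * (\<integral>x. dens V' E \<phi> U x * G (x a) \<partial>PiM V' (\<lambda>_. M))\<bar>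
          \<le> \<bar>\<integral>x. dens V' E \<phi> U x * G (x a) \<partial>PiM V' (\<lambda>_. M)\<bar>"
        using c by (simp add: abs_mult mult_left_le_one_le)
      then show ?thesis using st ih by simp
    next
      case False
      then obtain p e where pV: "p \<in> V" and pl: "p \<noteq> l" and eE: "e \<in> E" and ep: "e = (p, l) \<or> e = (l, p)"
        and oth: "\<forall>e'\<in>E - {e}. fst e' \<noteq> l \<and> snd e' \<noteq> l" using LS by blast
      define E' where "E' = E - {e}"
      have EE: "E = insert e E'" "e \<notin> E'" "finite E'" using eE finE by (auto simp: E'_def)
      have cE: "card E = Suc (card E')" using EE by simp
      have oth': "\<forall>e'\<in>E'. fst e' \<noteq> l \<and> snd e' \<noteq> l" using oth by (simp add: E'_def)
      have sub': "E' \<subseteq> V' \<times> V'" unfolding V'_def using sub_remove[OF subE _ oth'] by (auto simp: E'_def)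
      have pV': "p \<in> V'" using pV pl by (simp add: V'_def)
      have Ue: "in_WB M B (U e)" using UE eE by blast
      define h where "h = (\<lambda>z. \<integral>y. \<phi> l y * ek e l U z y \<partial>M)"
      have phil: "\<phi> l \<in> borel_measurable M" "\<forall>y\<in>space M. 0 \<le> \<phi> l y \<and> \<phi> l y \<le> 1" using phiV l(1) by auto
      have hm: "h \<in> borel_measurable M" unfolding h_def by (rule h_props(1)[where U=U and e=e and l=l, OF M Ue B phil])
      have hp: "\<And>z. z \<in> space M \<Longrightarrow> 0 \<le> h z \<and> h z \<le> B" unfolding h_def using h_props(2)[where U=U and e=e and l=l, OF M Ue B phil] by blast
      have int': "integrable (PiM (insert l V') (\<lambda>_. M)) (\<lambda>x. dens (insert l V') (insert e E') \<phi> U x * G (x a))"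
        using int VV(1) EE(1) by simp
      have st: "(\<integral>x. dens V E \<phi> U x * G (x a) \<partial>PiM V (\<lambda>_. M))
          = B * (\<integral>x. dens V' E' (\<phi>(p := (\<lambda>z. \<phi> p z * (h z / B)))) U x * G (x a) \<partial>PiM V' (\<lambda>_. M))"
        using step_edge[where \<Gamma>="\<lambda>x. G (x a)", OF M VV(3) VV(2) EE(3) EE(2) ep pl pV' oth' Ue B Gam int' hp h_def]
          VV(1) EE(1) by simp
      have w: "\<forall>v\<in>V'. (\<phi>(p := (\<lambda>z. \<phi> p z * (h z / B)))) v \<in> borel_measurable M \<and>
          (\<forall>z\<in>space M. 0 \<le> (\<phi>(p := (\<lambda>z. \<phi> p z * (h z / B)))) v z \<and> (\<phi>(p := (\<lambda>z. \<phi> p z * (h z / B)))) v z \<le> 1)"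
        using weight_update[OF phiV' hm hp] .
      have EsubE: "E' \<subseteq> E" by (auto simp: E'_def)
      note fs = forest_sub[OF irrE asymE ncE EsubE]
      have UE': "\<forall>e\<in>E'. in_WB M B (U e)" using UE EsubE by blast
      have ih: "\<bar>\<integral>x. dens V' E' (\<phi>(p := (\<lambda>z. \<phi> p z * (h z / B)))) U x * G (x a) \<partial>PiM V' (\<lambda>_. M)\<bar> \<le> B ^ card E' * C"
        using IH[OF VV(4) VV(5) sub' fs(1) fs(2) fs(3) w UE'] unfolding G_def C_def .
      have "\<bar>B * (\<integral>x. dens V' E' (\<phi>(p := (\<lambda>z. \<phi> p z * (h z / B)))) U x * G (x a) \<partial>PiM V' (\<lambda>_. M))\<bar>
          \<le> B * (B ^ card E' * C)"
        using ih B by (simp add: abs_mult mult_left_mono)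
      then show ?thesis using st cE by simp
    qed
  qed
  then show ?case unfolding G_def C_def .
qed



lemma dens_split:
  assumes "finite E" "e0 \<in> E"
  shows "dens V E \<phi> (U(e0 := Q)) x = dens V (E - {e0}) \<phi> U x * Q (x (fst e0)) (x (snd e0))"
proof -
  have "(\<Prod>e\<in>E. (U(e0 := Q)) e (x (fst e)) (x (snd e)))
      = (U(e0 := Q)) e0 (x (fst e0)) (x (snd e0)) * (\<Prod>e\<in>E - {e0}. (U(e0 := Q)) e (x (fst e)) (x (snd e)))"
    by (rule prod.remove[OF assms])
  also have "(\<Prod>e\<in>E - {e0}. (U(e0 := Q)) e (x (fst e)) (x (snd e))) = (\<Prod>e\<in>E - {e0}. U e (x (fst e)) (x (snd e)))"
    by (intro prod.cong) auto
  finally have "(\<Prod>e\<in>E. (U(e0 := Q)) e (x (fst e)) (x (snd e)))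
      = (U(e0 := Q)) e0 (x (fst e0)) (x (snd e0)) * (\<Prod>e\<in>E - {e0}. U e (x (fst e)) (x (snd e)))" .
  then show ?thesis unfolding dens_def by (simp add: ac_simps)
qed

lemma bound_e:
  assumes M: "prob_space M" and B: "0 \<le> B" and P: "in_WB M B P" and P': "in_WB M B P'"
    and fin: "finite V" and sub: "E \<subseteq> V \<times> V"
    and irr: "\<forall>i. (i, i) \<notin> E" and asym: "\<forall>i j. (i, j) \<in> E \<longrightarrow> (j, i) \<notin> E"
    and nc: "\<not> has_cycle E" and e0: "(a, b) \<in> E"
    and phi: "\<forall>v\<in>V. \<phi> v \<in> borel_measurable M \<and> (\<forall>z\<in>space M. 0 \<le> \<phi> v z \<and> \<phi> v z \<le> 1)"
    and U: "\<forall>e\<in>E - {(a, b)}. in_WB M B (U e)"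
  shows "\<bar>\<integral>x. dens V (E - {(a, b)}) \<phi> U x * (P (x a) (x b) - P' (x a) (x b)) \<partial>PiM V (\<lambda>_. M)\<bar>
     \<le> B ^ (card E - 1) * cut_norm M (\<lambda>x y. P x y - P' x y)"
  using fin sub irr asym nc e0 phi U
proof (induction V arbitrary: E \<phi> rule: finite_psubset_induct)
  case (psubset V E \<phi>)
  note IH = psubset(2) and finV = psubset(1) and subE = psubset(3)
    and irrE = psubset(4) and asymE = psubset(5) and ncE = psubset(6) and e0E = psubset(7)
    and phiV = psubset(8) and UE = psubset(9)
  interpret P: product_sigma_finite "\<lambda>_::nat. M"
    using M by (simp add: product_sigma_finite_def prob_space_imp_sigma_finite)
  define C where "C = cut_norm M (\<lambda>x y. P x y - P' x y)"
  define \<Gamma> where "\<Gamma> = (\<lambda>x::nat \<Rightarrow> _. P (x a) (x b) - P' (x a) (x b))"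
  define E0 where "E0 = E - {(a, b)}"
  have aV: "a \<in> V" and bV: "b \<in> V" using subE e0E by auto
  have ab: "a \<noteq> b" using irrE e0E by auto
  have finE: "finite E" using finV subE by (metis finite_SigmaI finite_subset)
  have sub0: "E0 \<subseteq> V \<times> V" using subE by (auto simp: E0_def)
  have Ucm: "\<forall>e\<in>E0. (\<lambda>(s,t). U e s t) \<in> borel_measurable (M \<Otimes>\<^sub>M M)" using UE inWB_meas unfolding E0_def by blast
  have Upos: "\<forall>e\<in>E0. \<forall>s\<in>space M. \<forall>t\<in>space M. 0 \<le> U e s t" using UE unfolding in_WB_def E0_def by blast
  have phim: "\<forall>v\<in>V. \<phi> v \<in> borel_measurable M" and phip: "\<forall>v\<in>V. \<forall>z\<in>space M. 0 \<le> \<phi> v z"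
    using phiV by auto
  have md: "dens V E0 \<phi> U \<in> borel_measurable (PiM V (\<lambda>_. M))" using meas_dens[OF sub0 phim Ucm] .
  have Dm: "(\<lambda>(x, y). P x y - P' x y) \<in> borel_measurable (M \<Otimes>\<^sub>M M)"
  proof -
    have "(\<lambda>(x, y). P x y - P' x y) = (\<lambda>z. (\<lambda>(x, y). P x y) z - (\<lambda>(x, y). P' x y) z)" by auto
    then show ?thesis using borel_measurable_diff[OF inWB_meas[OF P] inWB_meas[OF P']] by simp
  qed
  have mG: "\<Gamma> \<in> borel_measurable (PiM V (\<lambda>_. M))"
    unfolding \<Gamma>_def using meas_edge[OF Dm aV bV] by simp
  have UP: "\<forall>e\<in>E. in_WB M B ((U((a,b) := P)) e)" and UP': "\<forall>e\<in>E. in_WB M B ((U((a,b) := P')) e)"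
    using UE P P' by auto
  have nn1: "(\<integral>\<^sup>+x. ennreal (dens V E \<phi> (U((a,b) := P)) x) \<partial>PiM V (\<lambda>_. M)) \<le> ennreal (B ^ card E)"
    using nn_bound[OF M finV subE irrE asymE ncE phiV UP B] .
  have nn2: "(\<integral>\<^sup>+x. ennreal (dens V E \<phi> (U((a,b) := P')) x) \<partial>PiM V (\<lambda>_. M)) \<le> ennreal (B ^ card E)"
    using nn_bound[OF M finV subE irrE asymE ncE phiV UP' B] .
  have Ucm1: "\<forall>e\<in>E. (\<lambda>(s,t). (U((a,b) := P)) e s t) \<in> borel_measurable (M \<Otimes>\<^sub>M M)"
    using UP inWB_meas by blast
  have Ucm2: "\<forall>e\<in>E. (\<lambda>(s,t). (U((a,b) := P')) e s t) \<in> borel_measurable (M \<Otimes>\<^sub>M M)"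
    using UP' inWB_meas by blast
  have md1: "dens V E \<phi> (U((a,b) := P)) \<in> borel_measurable (PiM V (\<lambda>_. M))" using meas_dens[OF subE phim Ucm1] .
  have md2: "dens V E \<phi> (U((a,b) := P')) \<in> borel_measurable (PiM V (\<lambda>_. M))" using meas_dens[OF subE phim Ucm2] .
  have int: "integrable (PiM V (\<lambda>_. M)) (\<lambda>x. dens V E0 \<phi> U x * \<Gamma> x)"
  proof (rule integrable_dom[where g = "\<lambda>x. dens V E \<phi> (U((a,b) := P)) x + dens V E \<phi> (U((a,b) := P')) x"])
    show "(\<lambda>x. dens V E0 \<phi> U x * \<Gamma> x) \<in> borel_measurable (PiM V (\<lambda>_. M))"
      using borel_measurable_times[OF md mG] .
  next
    fix x assume x: "x \<in> space (PiM V (\<lambda>_. M))"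
    have dp: "0 \<le> dens V E0 \<phi> U x" using dens_nonneg[OF x sub0] phip Upos by auto
    have xab: "x a \<in> space M" "x b \<in> space M" using x aV bV by (auto simp: space_PiM)
    then have "0 \<le> P (x a) (x b)" "0 \<le> P' (x a) (x b)" using P P' unfolding in_WB_def by auto
    then have "\<bar>\<Gamma> x\<bar> \<le> P (x a) (x b) + P' (x a) (x b)" unfolding \<Gamma>_def by auto
    then have "\<bar>dens V E0 \<phi> U x * \<Gamma> x\<bar> \<le> dens V E0 \<phi> U x * (P (x a) (x b) + P' (x a) (x b))"
      using dp by (simp add: abs_mult mult_left_mono)
    also have "\<dots> = dens V E \<phi> (U((a,b) := P)) x + dens V E \<phi> (U((a,b) := P')) x"
      using dens_split[OF finE e0E, of V \<phi> U P x] dens_split[OF finE e0E, of V \<phi> U P' x]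
      by (simp add: E0_def algebra_simps)
    finally show "\<bar>dens V E0 \<phi> U x * \<Gamma> x\<bar> \<le> dens V E \<phi> (U((a,b) := P)) x + dens V E \<phi> (U((a,b) := P')) x" .
  next
    have nnp: "0 \<le> dens V E \<phi> (U((a,b) := P)) x" "0 \<le> dens V E \<phi> (U((a,b) := P')) x"
      if x: "x \<in> space (PiM V (\<lambda>_. M))" for x
    proof -
      have "\<forall>e\<in>E. \<forall>s\<in>space M. \<forall>t\<in>space M. 0 \<le> (U((a,b) := P)) e s t" using UP unfolding in_WB_def by blast
      then show "0 \<le> dens V E \<phi> (U((a,b) := P)) x" using dens_nonneg[OF x subE] phip by auto
      have "\<forall>e\<in>E. \<forall>s\<in>space M. \<forall>t\<in>space M. 0 \<le> (U((a,b) := P')) e s t" using UP' unfolding in_WB_def by blast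
      then show "0 \<le> dens V E \<phi> (U((a,b) := P')) x" using dens_nonneg[OF x subE] phip by auto
    qed
    have "(\<integral>\<^sup>+x. ennreal (dens V E \<phi> (U((a,b) := P)) x + dens V E \<phi> (U((a,b) := P')) x) \<partial>PiM V (\<lambda>_. M))
        = (\<integral>\<^sup>+x. ennreal (dens V E \<phi> (U((a,b) := P)) x) + ennreal (dens V E \<phi> (U((a,b) := P')) x) \<partial>PiM V (\<lambda>_. M))"
      using nnp by (intro nn_integral_cong) (simp add: ennreal_plus)
    also have "\<dots> = (\<integral>\<^sup>+x. ennreal (dens V E \<phi> (U((a,b) := P)) x) \<partial>PiM V (\<lambda>_. M))
        + (\<integral>\<^sup>+x. ennreal (dens V E \<phi> (U((a,b) := P')) x) \<partial>PiM V (\<lambda>_. M))"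
      using measurable_compose[OF md1 measurable_ennreal] measurable_compose[OF md2 measurable_ennreal]
      by (rule nn_integral_add)
    also have "\<dots> \<le> ennreal (B ^ card E) + ennreal (B ^ card E)" using nn1 nn2 by (rule add_mono)
    also have "\<dots> = ennreal (B ^ card E + B ^ card E)" using B by (intro ennreal_plus[symmetric]) auto
    also have "\<dots> < \<infinity>" by simp
    finally show "(\<integral>\<^sup>+x. ennreal (dens V E \<phi> (U((a,b) := P)) x + dens V E \<phi> (U((a,b) := P')) x) \<partial>PiM V (\<lambda>_. M)) < \<infinity>" .
  qed
  have Vne: "V \<noteq> {a}" using bV ab by auto
  obtain l where l: "l \<in> V" "l \<noteq> a" "leafy E l" using leaf_exists[OF finV subE irrE ncE aV Vne] by blast
  define V' where "V' = V - {l}"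
  have VV: "V = insert l V'" "l \<notin> V'" "finite V'" "V' \<subset> V" "a \<in> V'" using l finV aV by (auto simp: V'_def)
  have phiV': "\<forall>v\<in>V'. \<phi> v \<in> borel_measurable M \<and> (\<forall>z\<in>space M. 0 \<le> \<phi> v z \<and> \<phi> v z \<le> 1)"
    using phiV VV by auto
  note LS = leaf_struct[OF subE irrE asymE l(3)]
  have main: "\<bar>\<integral>x. dens V E0 \<phi> U x * \<Gamma> x \<partial>PiM V (\<lambda>_. M)\<bar> \<le> B ^ (card E - 1) * C"
  proof (cases "\<forall>e\<in>E. fst e \<noteq> l \<and> snd e \<noteq> l")
    case True
    have lb: "l \<noteq> b" using True e0E by force
    have Gam: "\<And>x y. \<Gamma> (x(l:=y)) = \<Gamma> x" using l(2) lb by (simp add: \<Gamma>_def)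
    have sub': "E \<subseteq> V' \<times> V'" unfolding V'_def using sub_remove[OF subE _ True] by blast
    have T0: "\<forall>e\<in>E0. fst e \<noteq> l \<and> snd e \<noteq> l" using True by (auto simp: E0_def)
    have int': "integrable (PiM (insert l V') (\<lambda>_. M)) (\<lambda>x. dens (insert l V') E0 \<phi> U x * \<Gamma> x)"
      using int VV(1) by simp
    have st: "(\<integral>x. dens V E0 \<phi> U x * \<Gamma> x \<partial>PiM V (\<lambda>_. M))
        = (\<integral>y. \<phi> l y \<partial>M) * (\<integral>x. dens V' E0 \<phi> U x * \<Gamma> x \<partial>PiM V' (\<lambda>_. M))"
      using step_iso[OF M VV(3) VV(2) T0 Gam int'] VV(1) by simp
    have ih: "\<bar>\<integral>x. dens V' E0 \<phi> U x * \<Gamma> x \<partial>PiM V' (\<lambda>_. M)\<bar> \<le> B ^ (card E - 1) * C"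
      using IH[OF VV(4) sub' irrE asymE ncE e0E phiV' UE] unfolding \<Gamma>_def C_def E0_def .
    have c: "0 \<le> (\<integral>y. \<phi> l y \<partial>M) \<and> (\<integral>y. \<phi> l y \<partial>M) \<le> 1" using integrable_phi[OF M] phiV l(1) by auto
    have "\<bar>(\<integral>y. \<phi> l y \<partial>M) * (\<integral>x. dens V' E0 \<phi> U x * \<Gamma> x \<partial>PiM V' (\<lambda>_. M))\<bar>
        \<le> \<bar>\<integral>x. dens V' E0 \<phi> U x * \<Gamma> x \<partial>PiM V' (\<lambda>_. M)\<bar>"
      using c by (simp add: abs_mult mult_left_le_one_le)
    then show ?thesis using st ih by simp
  next
    case False
    then obtain p e where pV: "p \<in> V" and pl: "p \<noteq> l" and eE: "e \<in> E" and ep: "e = (p, l) \<or> e = (l, p)"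
      and oth: "\<forall>e'\<in>E - {e}. fst e' \<noteq> l \<and> snd e' \<noteq> l" using LS by blast
    show ?thesis
    proof (cases "e = (a, b)")
      case True
      have lb: "l = b" and pa: "p = a" using ep True l(2) by auto
      have oth0: "\<forall>e'\<in>E0. fst e' \<noteq> b \<and> snd e' \<noteq> b" using oth True lb by (simp add: E0_def)
      have sub': "E0 \<subseteq> V' \<times> V'" unfolding V'_def using sub_remove[OF sub0 _ oth0] lb by blast
      have int': "integrable (PiM (insert b V') (\<lambda>_. M)) (\<lambda>x. dens (insert b V') E0 \<phi> U x * \<Gamma> x)"
        using int VV(1) lb by simp
      have bV': "b \<notin> V'" using VV(2) lb by simp
      have "(\<integral>x. dens V E0 \<phi> U x * \<Gamma> x \<partial>PiM V (\<lambda>_. M))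
          = (\<integral>x. (\<integral>y. dens (insert b V') E0 \<phi> U (x(b:=y)) * \<Gamma> (x(b:=y)) \<partial>M) \<partial>PiM V' (\<lambda>_. M))"
        using P.product_integral_insert[OF VV(3) bV' int'] VV(1) lb by simp
      also have "\<dots> = (\<integral>x. dens V' E0 \<phi> U x * gfun M (\<phi> b) P P' (x a) \<partial>PiM V' (\<lambda>_. M))"
      proof (rule Bochner_Integration.integral_cong[OF refl])
        fix x
        have "(\<integral>y. dens (insert b V') E0 \<phi> U (x(b:=y)) * \<Gamma> (x(b:=y)) \<partial>M)
            = (\<integral>y. dens V' E0 \<phi> U x * (\<phi> b y * (P (x a) y - P' (x a) y)) \<partial>M)"
          using ab by (intro Bochner_Integration.integral_cong refl)
            (simp only: dens_insert_iso[OF VV(3) bV' oth0] \<Gamma>_def fun_upd_same fun_upd_other, simp add: ac_simps)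
        also have "\<dots> = dens V' E0 \<phi> U x * gfun M (\<phi> b) P P' (x a)" by (simp add: gfun_def)
        finally show "(\<integral>y. dens (insert b V') E0 \<phi> U (x(b:=y)) * \<Gamma> (x(b:=y)) \<partial>M)
            = dens V' E0 \<phi> U x * gfun M (\<phi> b) P P' (x a)" .
      qed
      finally have eq: "(\<integral>x. dens V E0 \<phi> U x * \<Gamma> x \<partial>PiM V (\<lambda>_. M))
          = (\<integral>x. dens V' E0 \<phi> U x * gfun M (\<phi> b) P P' (x a) \<partial>PiM V' (\<lambda>_. M))" .
      have E0s: "E0 \<subseteq> E" by (auto simp: E0_def)
      note fs = forest_sub[OF irrE asymE ncE E0s]
      have psb: "\<phi> b \<in> borel_measurable M" "\<forall>y\<in>space M. 0 \<le> \<phi> b y \<and> \<phi> b y \<le> 1" using phiV bV by auto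
      have UE0: "\<forall>e\<in>E0. in_WB M B (U e)" using UE by (simp add: E0_def)
      have cE: "card E0 = card E - 1" using finE e0E by (simp add: E0_def)
      show ?thesis using bound_g[OF M B P P' psb VV(3) VV(5) sub' fs(1) fs(2) fs(3) phiV' UE0] eq cE
        unfolding C_def by simp
    next
      case False
      have lb: "l \<noteq> b" using oth False e0E by force
      have Gam: "\<And>x y. \<Gamma> (x(l:=y)) = \<Gamma> x" using l(2) lb by (simp add: \<Gamma>_def)
      define E' where "E' = E - {e}"
      have EE: "E0 = insert e (E' - {(a, b)})" "e \<notin> E' - {(a, b)}" "finite (E' - {(a, b)})"
        using eE finE False by (auto simp: E'_def E0_def)
      have e0E': "(a, b) \<in> E'" using e0E False by (simp add: E'_def)
      have cE: "card E = Suc (card E')" unfolding E'_def by (rule card_Suc_Diff1[symmetric, OF finE eE])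
      have cE': "card E' \<ge> 1" using e0E' finE by (metis E'_def One_nat_def Suc_leI card_gt_0_iff empty_iff finite_Diff)
      have oth': "\<forall>e'\<in>E' - {(a, b)}. fst e' \<noteq> l \<and> snd e' \<noteq> l" using oth by (simp add: E'_def)
      have othE': "\<forall>e'\<in>E'. fst e' \<noteq> l \<and> snd e' \<noteq> l" using oth by (simp add: E'_def)
      have sub': "E' \<subseteq> V' \<times> V'" unfolding V'_def using sub_remove[OF subE _ othE'] by (auto simp: E'_def)
      have pV': "p \<in> V'" using pV pl by (simp add: V'_def)
      have Ue: "in_WB M B (U e)" using UE eE False by blast
      define h where "h = (\<lambda>z. \<integral>y. \<phi> l y * ek e l U z y \<partial>M)"
      have phil: "\<phi> l \<in> borel_measurable M" "\<forall>y\<in>space M. 0 \<le> \<phi> l y \<and> \<phi> l y \<le> 1" using phiV l(1) by auto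
      have hm: "h \<in> borel_measurable M" unfolding h_def by (rule h_props(1)[where U=U and e=e and l=l, OF M Ue B phil])
      have hp: "\<And>z. z \<in> space M \<Longrightarrow> 0 \<le> h z \<and> h z \<le> B" unfolding h_def
        using h_props(2)[where U=U and e=e and l=l, OF M Ue B phil] by blast
      have int': "integrable (PiM (insert l V') (\<lambda>_. M)) (\<lambda>x. dens (insert l V') (insert e (E' - {(a, b)})) \<phi> U x * \<Gamma> x)"
        using int VV(1) EE(1) by simp
      have st: "(\<integral>x. dens V E0 \<phi> U x * \<Gamma> x \<partial>PiM V (\<lambda>_. M))
          = B * (\<integral>x. dens V' (E' - {(a, b)}) (\<phi>(p := (\<lambda>z. \<phi> p z * (h z / B)))) U x * \<Gamma> x \<partial>PiM V' (\<lambda>_. M))"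
        using step_edge[OF M VV(3) VV(2) EE(3) EE(2) ep pl pV' oth' Ue B Gam int' hp h_def] VV(1) EE(1) by simp
      have w: "\<forall>v\<in>V'. (\<phi>(p := (\<lambda>z. \<phi> p z * (h z / B)))) v \<in> borel_measurable M \<and>
          (\<forall>z\<in>space M. 0 \<le> (\<phi>(p := (\<lambda>z. \<phi> p z * (h z / B)))) v z \<and> (\<phi>(p := (\<lambda>z. \<phi> p z * (h z / B)))) v z \<le> 1)"
        using weight_update[OF phiV' hm hp] .
      have EsubE: "E' \<subseteq> E" by (auto simp: E'_def)
      note fs = forest_sub[OF irrE asymE ncE EsubE]
      have UE': "\<forall>e\<in>E' - {(a, b)}. in_WB M B (U e)" using UE EsubE by blast
      have ih: "\<bar>\<integral>x. dens V' (E' - {(a, b)}) (\<phi>(p := (\<lambda>z. \<phi> p z * (h z / B)))) U x * \<Gamma> x \<partial>PiM V' (\<lambda>_. M)\<bar>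
          \<le> B ^ (card E' - 1) * C"
        using IH[OF VV(4) sub' fs(1) fs(2) fs(3) e0E' w UE'] unfolding \<Gamma>_def C_def .
      have "\<bar>B * (\<integral>x. dens V' (E' - {(a, b)}) (\<phi>(p := (\<lambda>z. \<phi> p z * (h z / B)))) U x * \<Gamma> x \<partial>PiM V' (\<lambda>_. M))\<bar>
          \<le> B * (B ^ (card E' - 1) * C)"
        using ih B by (simp add: abs_mult mult_left_mono)
      also have "\<dots> = B ^ (card E - 1) * C"
      proof -
        have "card E - 1 = Suc (card E' - 1)" using cE cE' by simp
        then show ?thesis by simp
      qed
      finally show ?thesis using st by simp
    qed
  qed
  then show ?case unfolding \<Gamma>_def C_def E0_def .
qed



lemma T_props:
  assumes M: "prob_space M" and B: "0 \<le> B" and fin: "finite V" and sub: "E \<subseteq> V \<times> V"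
    and irr: "\<forall>i. (i, i) \<notin> E" and asym: "\<forall>i j. (i, j) \<in> E \<longrightarrow> (j, i) \<notin> E"
    and nc: "\<not> has_cycle E" and U: "\<forall>e\<in>E. in_WB M B (U e)"
  shows "integrable (PiM V (\<lambda>_. M)) (dens V E (\<lambda>_ _. 1) U)"
    and "(\<integral>x. dens V E (\<lambda>_ _. 1) U x \<partial>PiM V (\<lambda>_. M)) \<le> B ^ card E"
proof -
  have phi: "\<forall>v\<in>V. (\<lambda>_. 1::real) \<in> borel_measurable M \<and> (\<forall>z\<in>space M. 0 \<le> (1::real) \<and> (1::real) \<le> 1)"
    by simp
  have Ucm: "\<forall>e\<in>E. (\<lambda>(s,t). U e s t) \<in> borel_measurable (M \<Otimes>\<^sub>M M)" using U inWB_meas by blast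
  have Upos: "\<forall>e\<in>E. \<forall>s\<in>space M. \<forall>t\<in>space M. 0 \<le> U e s t" using U unfolding in_WB_def by blast
  have md: "dens V E (\<lambda>_ _. 1) U \<in> borel_measurable (PiM V (\<lambda>_. M))"
    using meas_dens[OF sub _ Ucm] by simp
  have nn: "\<forall>x\<in>space (PiM V (\<lambda>_. M)). 0 \<le> dens V E (\<lambda>_ _. 1) U x"
    using dens_nonneg[OF _ sub, of _ M "\<lambda>_ _. 1" U] Upos by auto
  have b: "(\<integral>\<^sup>+x. ennreal (dens V E (\<lambda>_ _. 1) U x) \<partial>PiM V (\<lambda>_. M)) \<le> ennreal (B ^ card E)"
    using nn_bound[OF M fin sub irr asym nc phi U B] .
  show "integrable (PiM V (\<lambda>_. M)) (dens V E (\<lambda>_ _. 1) U)"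
  proof (rule integrableI_nonneg[OF md])
    show "AE x in PiM V (\<lambda>_. M). 0 \<le> dens V E (\<lambda>_ _. 1) U x" using nn by (intro AE_I2) auto
    show "(\<integral>\<^sup>+x. ennreal (dens V E (\<lambda>_ _. 1) U x) \<partial>PiM V (\<lambda>_. M)) < \<infinity>"
      using le_less_trans[OF b] by simp
  qed
  have e: "(\<integral>x. dens V E (\<lambda>_ _. 1) U x \<partial>PiM V (\<lambda>_. M)) = enn2real (\<integral>\<^sup>+x. ennreal (dens V E (\<lambda>_ _. 1) U x) \<partial>PiM V (\<lambda>_. M))"
    using nn by (intro integral_eq_nn_integral[OF md]) (auto intro: AE_I2)
  show "(\<integral>x. dens V E (\<lambda>_ _. 1) U x \<partial>PiM V (\<lambda>_. M)) \<le> B ^ card E"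
    unfolding e using enn2real_mono[OF b] B by simp
qed

theorem mainTheorem13:
  fixes M :: "'a measure" and r :: nat and E :: "(nat \<times> nat) set" and B :: real
    and W W' :: "nat \<times> nat \<Rightarrow> 'a \<Rightarrow> 'a \<Rightarrow> real"
  assumes "prob_space M"
    and "oriented_tree r E"
    and "0 \<le> B"
    and "\<forall>e\<in>E. in_WB M B (W e)"
    and "\<forall>e\<in>E. in_WB M B (W' e)"
  shows "t0 M r E W \<le> B ^ card E \<and>
         \<bar>t0 M r E W - t0 M r E W'\<bar>
           \<le> B ^ (card E - 1) * (\<Sum>e\<in>E. cut_norm M (\<lambda>x y. W e x y - W' e x y))"
proof -
  note M = assms(1) and B = assms(3) and WE = assms(4) and WE' = assms(5)
  define V where "V = {1..r}"
  have fin: "finite V" and sub: "E \<subseteq> V \<times> V" and irr: "\<forall>i. (i, i) \<notin> E"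
    and asym: "\<forall>i j. (i, j) \<in> E \<longrightarrow> (j, i) \<notin> E" and nc: "\<not> has_cycle E"
    using assms(2) unfolding oriented_tree_def V_def by auto
  have finE: "finite E" using fin sub by (metis finite_SigmaI finite_subset)
  define T where "T U = (\<integral>x. dens V E (\<lambda>_ _. 1) U x \<partial>PiM V (\<lambda>_. M))" for U
  have t0T: "t0 M r E U = T U" for U unfolding t0_def T_def dens_def V_def by simp
  note TP = T_props[OF M B fin sub irr asym nc]
  define H where "H S = (\<lambda>e. if e \<in> S then W' e else W e)" for S
  have HWB: "\<forall>e\<in>E. in_WB M B (H S e)" for S using WE WE' by (auto simp: H_def)
  define C where "C e = cut_norm M (\<lambda>x y. W e x y - W' e x y)" for e
  have tele: "\<bar>T W - T (H S)\<bar> \<le> B ^ (card E - 1) * (\<Sum>e\<in>S. C e)" if "S \<subseteq> E" for S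
  proof -
    have "finite S" using that finE finite_subset by blast
    then show ?thesis using that
    proof (induction S rule: finite_induct)
      case empty
      have "H {} = W" by (auto simp: H_def)
      then show ?case by simp
    next
      case (insert e S)
      have eE: "e \<in> E" and SE: "S \<subseteq> E" using insert by auto
      obtain a b where e: "e = (a, b)" by (cases e)
      have H1: "H S = (H S)(e := W e)" using insert(2) by (auto simp: H_def fun_eq_iff)
      have H2: "H (insert e S) = (H S)(e := W' e)" by (auto simp: H_def fun_eq_iff)
      have i1: "integrable (PiM V (\<lambda>_. M)) (dens V E (\<lambda>_ _. 1) (H S))" using TP(1)[OF HWB] .
      have i2: "integrable (PiM V (\<lambda>_. M)) (dens V E (\<lambda>_ _. 1) (H (insert e S)))" using TP(1)[OF HWB] .
      have d1: "dens V E (\<lambda>_ _. 1) (H S) x = dens V (E - {e}) (\<lambda>_ _. 1) (H S) x * W e (x a) (x b)" for x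
        using dens_split[OF finE eE, of V "\<lambda>_ _. 1" "H S" "W e" x] H1 e by simp
      have d2: "dens V E (\<lambda>_ _. 1) (H (insert e S)) x = dens V (E - {e}) (\<lambda>_ _. 1) (H S) x * W' e (x a) (x b)" for x
        using dens_split[OF finE eE, of V "\<lambda>_ _. 1" "H S" "W' e" x] H2 e by simp
      have "T (H S) - T (H (insert e S))
          = (\<integral>x. dens V E (\<lambda>_ _. 1) (H S) x - dens V E (\<lambda>_ _. 1) (H (insert e S)) x \<partial>PiM V (\<lambda>_. M))"
        unfolding T_def using Bochner_Integration.integral_diff[OF i1 i2] by simp
      also have "\<dots> = (\<integral>x. dens V (E - {(a, b)}) (\<lambda>_ _. 1) (H S) x * (W e (x a) (x b) - W' e (x a) (x b)) \<partial>PiM V (\<lambda>_. M))"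
        unfolding d1 d2 by (simp add: e algebra_simps)
      finally have eq: "T (H S) - T (H (insert e S)) = \<dots>" .
      have U': "\<forall>e'\<in>E - {(a, b)}. in_WB M B (H S e')" using HWB by blast
      have phi: "\<forall>v\<in>V. (\<lambda>_. 1::real) \<in> borel_measurable M \<and> (\<forall>z\<in>space M. 0 \<le> (1::real) \<and> (1::real) \<le> 1)"
        by simp
      have be: "\<bar>T (H S) - T (H (insert e S))\<bar> \<le> B ^ (card E - 1) * C e"
        unfolding eq C_def
        using bound_e[OF M B WE[rule_format, OF eE] WE'[rule_format, OF eE] fin sub irr asym nc _ phi U'] eE e
        by simp
      have ih: "\<bar>T W - T (H S)\<bar> \<le> B ^ (card E - 1) * (\<Sum>e\<in>S. C e)" using insert SE by blast
      have "\<bar>T W - T (H (insert e S))\<bar> \<le> \<bar>T W - T (H S)\<bar> + \<bar>T (H S) - T (H (insert e S))\<bar>" by simp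
      also have "\<dots> \<le> B ^ (card E - 1) * (\<Sum>e\<in>S. C e) + B ^ (card E - 1) * C e" using ih be by simp
      also have "\<dots> = B ^ (card E - 1) * (\<Sum>e\<in>insert e S. C e)" using insert(1,2) by (simp add: algebra_simps)
      finally show ?case .
    qed
  qed
  have HE: "T (H E) = T W'"
  proof -
    have "dens V E (\<lambda>_ _. 1) (H E) x = dens V E (\<lambda>_ _. 1) W' x" for x
      unfolding dens_def H_def by (intro arg_cong2[where f="(*)"] refl prod.cong) auto
    then have "dens V E (\<lambda>_ _. 1) (H E) = dens V E (\<lambda>_ _. 1) W'" by (rule ext)
    then show ?thesis unfolding T_def by (rule arg_cong)
  qed
  have c1: "t0 M r E W \<le> B ^ card E" unfolding t0T T_def using TP(2)[OF WE] .
  have c2: "\<bar>t0 M r E W - t0 M r E W'\<bar> \<le> B ^ (card E - 1) * (\<Sum>e\<in>E. cut_norm M (\<lambda>x y. W e x y - W' e x y))"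
    using tele[OF subset_refl] HE unfolding t0T C_def by simp
  show ?thesis using c1 c2 by blast
qed


end
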